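(* Let $A,B\in\mathbb{C}^{n\times n}$ with $B$ sectorial. Then $I+AB$ is invertible if there exists $r\ge0$ such that $A$ is $r$-sectorial and $$\bar\psi_r(A)+\bar\phi(B)<\pi,\qquad \underline\psi_r(A)+\underline\phi(B)>-\pi,\qquad \bar\sigma(B)\,r<1.$$
   Context: $\bar\sigma$: largest singular value. Numerical range $\mathcal{W}(B)=\{x^*Bx:\|x\|=1\}$; $B$ is sectorial if $0\notin\mathcal W(B)$, then $B=T^*DT$ with $T$ nonsingular, $D$ diagonal unitary, and the phases $\bar\phi(B)\ge\dots\ge\underline\phi(B)$ are the arguments of the diagonal entries of $D$ chosen with $\bar\phi(B)-\underline\phi(B)<\pi$ and $(\bar\phi(B)+\underline\phi(B))/2\in(-\pi,\pi]$. $\mathcal{DW}(A)=\{(\mathrm{Re}\,x^*Ax,\mathrm{Im}\,x^*Ax,\|Ax\|^2):\|x\|=1\}$, $\mathcal{W}_{\ge r}(A)=\{(p,q):(p,q,h^2)\in\mathcal{DW}(A),\ h\ge r\}$; $A$ is $r$-sectorial if $(0,0)\notin\mathcal{W}_{\ge r}(A)$. For $r$-sectorial $A$ with $r\le\bar\sigma(A)$: $\underline\psi_r(A)=\min\{\angle z:(\mathrm{Re}\,z,\mathrm{Im}\,z)\in\mathcal{W}_{\ge r}(A)\}$, $\bar\psi_r(A)=\max\{\angle z:(\mathrm{Re}\,z,\mathrm{Im}\,z)\in\mathcal{W}_{\ge r}(A)\}$, angles on a branch with $(\underline\psi_r+\bar\psi_r)/2\in(-\pi,\pi]$, $\bar\psi_r-\underline\psi_r\in(0,\pi]$;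 for $r>\bar\sigma(A)$, by convention $\underline\psi_r(A)=+\infty$, $\bar\psi_r(A)=-\infty$. *)

theory Defs
  imports "HOL-Analysis.Analysis"
begin

definition cnj_tr :: "complex^'n^'m \<Rightarrow> complex^'m^'n" where
  "cnj_tr T = (\<chi> i j. cnj (T $ j $ i))"

definition qform :: "complex^'n^'n \<Rightarrow> complex^'n \<Rightarrow> complex" where
  "qform A x = (\<Sum>i\<in>UNIV. cnj (x $ i) * (A *v x) $ i)"

definition num_range :: "complex^'n^'n \<Rightarrow> complex set" where
  "num_range A = {qform A x | x. norm x = 1}"

definition sectorial :: "complex^'n^'n \<Rightarrow> bool" where
  "sectorial B \<longleftrightarrow> 0 \<notin> num_range B"

definition sigma_max :: "complex^'n^'m \<Rightarrow> real" where
  "sigma_max A = onorm (\<lambda>x::complex^'n. A *v x)"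

definition sectorial_decomp :: "complex^'n^'n \<Rightarrow> complex^'n^'n \<Rightarrow> ('n \<Rightarrow> real) \<Rightarrow> bool" where
  "sectorial_decomp B T \<theta> \<longleftrightarrow>
     invertible T \<and>
     B = cnj_tr T ** (\<chi> i j. if i = j then cis (\<theta> i) else 0) ** T \<and>
     Max (range \<theta>) - Min (range \<theta>) < pi \<and>
     - pi < (Max (range \<theta>) + Min (range \<theta>)) / 2 \<and>
     (Max (range \<theta>) + Min (range \<theta>)) / 2 \<le> pi"

definition phase_max :: "complex^'n^'n \<Rightarrow> real" where
  "phase_max B = (SOME m. \<exists>T \<theta>. sectorial_decomp B T \<theta> \<and> m = Max (range \<theta>))"

definition phase_min :: "complex^'n^'n \<Rightarrow> real" where
  "phase_min B = (SOME m. \<exists>T \<theta>. sectorial_decomp B T \<theta> \<and> m = Min (range \<theta>))"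

definition DW :: "complex^'n^'n \<Rightarrow> (real \<times> real \<times> real) set" where
  "DW A = {(Re (qform A x), Im (qform A x), (norm (A *v x))\<^sup>2) | x. norm x = 1}"

definition W_ge :: "real \<Rightarrow> complex^'n^'n \<Rightarrow> (real \<times> real) set" where
  "W_ge r A = {(p, q). \<exists>h. (p, q, h\<^sup>2) \<in> DW A \<and> h \<ge> r}"

definition r_sectorial :: "real \<Rightarrow> complex^'n^'n \<Rightarrow> bool" where
  "r_sectorial r A \<longleftrightarrow> (0, 0) \<notin> W_ge r A"

definition angle_arc :: "(real \<times> real) set \<Rightarrow> real \<Rightarrow> real \<Rightarrow> bool" where
  "angle_arc S a b \<longleftrightarrow>
     a \<le> b \<and> b - a \<le> pi \<and> - pi < (a + b) / 2 \<and> (a + b) / 2 \<le> pi \<and>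
     (\<forall>(p, q)\<in>S. \<exists>t. a \<le> t \<and> t \<le> b \<and> Complex p q = of_real (cmod (Complex p q)) * cis t) \<and>
     (\<exists>(p, q)\<in>S. Complex p q = of_real (cmod (Complex p q)) * cis a) \<and>
     (\<exists>(p, q)\<in>S. Complex p q = of_real (cmod (Complex p q)) * cis b)"

definition psi_min :: "real \<Rightarrow> complex^'n^'n \<Rightarrow> ereal" where
  "psi_min r A = (if r > sigma_max A then \<infinity>
                  else ereal (SOME a. \<exists>b. angle_arc (W_ge r A) a b))"

definition psi_max :: "real \<Rightarrow> complex^'n^'n \<Rightarrow> ereal" where
  "psi_max r A = (if r > sigma_max A then - \<infinity>
                  else ereal (SOME b. \<exists>a. angle_arc (W_ge r A) a b))"

end

theory Submission
  imports Defs
begin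

definition cinner :: "complex^'n \<Rightarrow> complex^'n \<Rightarrow> complex" where
  "cinner u w = (\<Sum>i\<in>UNIV. cnj (u $ i) * w $ i)"

lemma qform_cinner: "qform M x = cinner x (M *v x)"
  by (simp add: qform_def cinner_def)

lemma cinner_add_right: "cinner u (w1 + w2) = cinner u w1 + cinner u w2"
  by (simp add: cinner_def distrib_left sum.distrib)

lemma cinner_add_left: "cinner (u1 + u2) w = cinner u1 w + cinner u2 w"
  by (simp add: cinner_def distrib_right sum.distrib)

lemma cinner_diff_right: "cinner u (w1 - w2) = cinner u w1 - cinner u w2"
  by (simp add: cinner_def right_diff_distrib sum_subtractf)

lemma cinner_diff_left: "cinner (u1 - u2) w = cinner u1 w - cinner u2 w"
  by (simp add: cinner_def left_diff_distrib sum_subtractf)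

lemma cinner_scale_right: "cinner u (c *s w) = c * cinner u w"
  by (simp add: cinner_def sum_distrib_left algebra_simps)

lemma cinner_scale_left: "cinner (c *s u) w = cnj c * cinner u w"
  by (simp add: cinner_def sum_distrib_left algebra_simps)

lemma cinner_minus_right: "cinner u (- w) = - cinner u w"
  by (simp add: cinner_def sum_negf)

lemma cinner_zero_left [simp]: "cinner 0 w = 0"
  by (simp add: cinner_def)

lemma cinner_zero_right [simp]: "cinner u 0 = 0"
  by (simp add: cinner_def)

lemma cinner_commute: "cinner w u = cnj (cinner u w)"
  by (simp add: cinner_def mult.commute)

lemma Re_cinner: "Re (cinner u w) = inner u w"
  by (simp add: cinner_def inner_vec_def Re_sum inner_complex_def)

lemma Im_cinner_self: "Im (cinner u u) = 0"
  by (simp add: cinner_def Im_sum)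

lemma cinner_self: "cinner u u = of_real ((norm u)^2)"
proof -
  have "Re (cinner u u) = (norm u)^2" by (simp add: Re_cinner power2_norm_eq_inner)
  then show ?thesis using Im_cinner_self[of u] by (simp add: complex_eq_iff)
qed

lemma cinner_self_eq_0: "cinner u u = 0 \<longleftrightarrow> u = 0"
  by (simp add: cinner_self)

lemma cinner_cnj_tr: "cinner u (M *v w) = cinner (cnj_tr M *v u) w"
  by (simp add: cinner_def cnj_tr_def matrix_vector_mult_def sum_distrib_left sum_distrib_right
      algebra_simps cnj_sum) (rule sum.swap)

lemma cnj_tr_cnj_tr [simp]: "cnj_tr (cnj_tr M) = M"
  by (simp add: cnj_tr_def vec_eq_iff)

lemma cnj_tr_mult: "cnj_tr (X ** Y) = cnj_tr Y ** cnj_tr X"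
  by (simp add: cnj_tr_def vec_eq_iff matrix_matrix_mult_def cnj_sum mult.commute)

lemma cnj_tr_mat1 [simp]: "cnj_tr (mat 1 :: complex^'n^'n) = mat 1"
  by (simp add: cnj_tr_def vec_eq_iff mat_def)

lemma congr_entry:
  "(cnj_tr P ** M ** P) $ i $ j = cinner (column i P) (M *v column j P)"
  by (simp add: cinner_def cnj_tr_def matrix_matrix_mult_def matrix_vector_mult_def column_def
      sum_distrib_left sum_distrib_right algebra_simps) (rule sum.swap)

section \<open>Convexity of the restricted numerical range\<close>

definition Wset :: "real \<Rightarrow> complex^'n^'n \<Rightarrow> complex set" where
  "Wset r A = {qform A x | x. norm x = 1 \<and> r \<le> norm (A *v x)}"

lemma cinner_expand2:
  "cinner (\<alpha> *s p + \<beta> *s q) (\<gamma> *s p' + \<delta> *s q') =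
     cnj \<alpha> * \<gamma> * cinner p p' + cnj \<alpha> * \<delta> * cinner p q' + cnj \<beta> * \<gamma> * cinner q p' + cnj \<beta> * \<delta> * cinner q q'"
  by (simp add: cinner_add_left cinner_add_right cinner_scale_left cinner_scale_right algebra_simps)

lemma matvec_comb: fixes A :: "complex^'n^'m" shows "A *v (\<alpha> *s p + \<beta> *s q) = \<alpha> *s (A *v p) + \<beta> *s (A *v q)"
  by (simp add: matrix_vector_right_distrib vec.scale)

lemma cnj_mult_self: "cnj z * z = of_real ((cmod z)^2)"
  by (metis complex_norm_square mult.commute of_real_power)

lemma pure_param:
  assumes "0 \<le> p" "p \<le> 1" "(cmod c)^2 = p * (1 - p)"
  shows "\<exists>\<alpha> \<beta>. cnj \<alpha> * \<alpha> = of_real p \<and> cnj \<beta> * \<beta> = of_real (1 - p) \<and> cnj \<alpha> * \<beta> = c"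
proof (cases "p = 0")
  case True
  then have "c = 0" using assms by simp
  then show ?thesis using True by (intro exI[of _ 0] exI[of _ 1]) simp
next
  case False
  then have pp: "p > 0" using assms by simp
  define \<alpha> where "\<alpha> = complex_of_real (sqrt p)"
  define \<beta> where "\<beta> = c / complex_of_real (sqrt p)"
  have "cnj \<alpha> * \<alpha> = of_real p" using pp by (simp add: \<alpha>_def flip: of_real_mult)
  moreover have "cnj \<alpha> * \<beta> = c" using pp by (simp add: \<alpha>_def \<beta>_def)
  moreover have "cnj \<beta> * \<beta> = of_real (1 - p)"
  proof -
    have "cnj \<beta> * \<beta> = of_real ((cmod \<beta>)^2)" by (rule cnj_mult_self)
    also have "(cmod \<beta>)^2 = (cmod c)^2 / p" using pp
      by (simp add: \<beta>_def norm_divide power_divide)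
    also have "\<dots> = 1 - p" using pp assms(3) by (simp add: field_simps)
    finally show ?thesis .
  qed
  ultimately show ?thesis by blast
qed

lemma quad_root:
  fixes Q L K :: real
  assumes "Q > 0" "K \<le> 0"
  shows "\<exists>s\<ge>0. Q * s^2 + L * s + K = 0"
proof -
  define D where "D = L^2 - 4 * Q * K"
  have D0: "D \<ge> L^2" using assms by (simp add: D_def mult_nonneg_nonpos)
  then have Dn: "D \<ge> 0" by (meson order_trans zero_le_power2)
  define s where "s = (sqrt D - L) / (2 * Q)"
  have "sqrt D \<ge> \<bar>L\<bar>" using D0 real_sqrt_abs real_sqrt_le_mono by metis
  then have "s \<ge> 0" using assms by (simp add: s_def)
  moreover have "Q * s^2 + L * s + K = 0"
  proof -
    have sq: "(sqrt D)^2 = D" using Dn by simp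
    have "Q * s^2 + L * s + K = ((sqrt D)^2 - L^2 + 4 * Q * K) / (4 * Q)"
      using assms by (simp add: s_def field_simps power2_eq_square)
    then show ?thesis by (simp add: sq) (simp add: D_def)
  qed
  ultimately show ?thesis by blast
qed

lemma kernel3:
  fixes k1 k2 k3 :: complex
  shows "\<exists>dp dc. (dp, dc) \<noteq> (0, 0) \<and> of_real dp * k1 + dc * k2 + cnj dc * k3 = 0"
proof -
  define w1 :: "real \<times> complex" where
    "w1 = (Re k1, Complex (Re k2 + Re k3) (Im k3 - Im k2))"
  define w2 :: "real \<times> complex" where
    "w2 = (Im k1, Complex (Im k2 + Im k3) (Re k2 - Re k3))"
  have "dim {w1, w2} \<le> card {w1, w2}" by (rule dim_le_card') simp
  also have "\<dots> \<le> 2" by (simp add: card_insert_le_m1)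
  also have "\<dots> < DIM(real \<times> complex)" by simp
  finally obtain d where d: "d \<noteq> 0" "\<And>y. y \<in> span {w1, w2} \<Longrightarrow> orthogonal d y"
    using orthogonal_to_subspace_exists by blast
  obtain dp dc where dd: "d = (dp, dc)" by (cases d)
  have o1: "inner d w1 = 0" using d(2)[of w1] by (simp add: span_base orthogonal_def)
  have o2: "inner d w2 = 0" using d(2)[of w2] by (simp add: span_base orthogonal_def)
  have "of_real dp * k1 + dc * k2 + cnj dc * k3 = 0"
    using o1 o2 by (simp add: dd w1_def w2_def inner_complex_def complex_eq_iff algebra_simps)
  then show ?thesis using d(1) dd by (intro exI[of _ dp] exI[of _ dc]) (auto simp: zero_prod_def)
qed

definition Fm :: "complex^'n^'n \<Rightarrow> complex^'n \<Rightarrow> complex^'n \<Rightarrow> real \<Rightarrow> complex \<Rightarrow> complex" where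
  "Fm A u1 u2 p c = of_real p * cinner u1 (A *v u1) + c * cinner u1 (A *v u2)
     + cnj c * cinner u2 (A *v u1) + of_real (1 - p) * cinner u2 (A *v u2)"

definition Gm :: "complex^'n^'n \<Rightarrow> complex^'n \<Rightarrow> complex^'n \<Rightarrow> real \<Rightarrow> complex \<Rightarrow> real" where
  "Gm A u1 u2 p c = p * Re (cinner (A *v u1) (A *v u1)) + (1 - p) * Re (cinner (A *v u2) (A *v u2))
     + 2 * Re (c * cinner (A *v u1) (A *v u2))"

lemma pure_eval:
  fixes A :: "complex^'n^'n"
  assumes o: "cinner u1 u1 = 1" "cinner u2 u2 = 1" "cinner u1 u2 = 0"
    and ab: "cnj \<alpha> * \<alpha> = of_real p" "cnj \<beta> * \<beta> = of_real (1 - p)" "cnj \<alpha> * \<beta> = c"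
  shows "norm (\<alpha> *s u1 + \<beta> *s u2) = 1"
    and "qform A (\<alpha> *s u1 + \<beta> *s u2) = Fm A u1 u2 p c"
    and "(norm (A *v (\<alpha> *s u1 + \<beta> *s u2)))^2 = Gm A u1 u2 p c"
proof -
  have o21: "cinner u2 u1 = 0" using o(3) by (simp add: cinner_commute[of u2 u1])
  have c2: "cnj \<beta> * \<alpha> = cnj c" using ab(3) by (simp flip: ab(3) add: mult.commute)
  have "cinner (\<alpha> *s u1 + \<beta> *s u2) (\<alpha> *s u1 + \<beta> *s u2) = 1"
    using o o21 ab by (simp add: cinner_expand2)
  then have "of_real ((norm (\<alpha> *s u1 + \<beta> *s u2))^2) = (1::complex)" by (simp add: cinner_self)
  then have "(norm (\<alpha> *s u1 + \<beta> *s u2))^2 = 1" by (metis of_real_eq_1_iff)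
  then show "norm (\<alpha> *s u1 + \<beta> *s u2) = 1" using norm_ge_zero[of "\<alpha> *s u1 + \<beta> *s u2"] by (simp add: power2_eq_1_iff)
  show "qform A (\<alpha> *s u1 + \<beta> *s u2) = Fm A u1 u2 p c"
    unfolding qform_cinner matvec_comb cinner_expand2 Fm_def ab c2 by (simp add: algebra_simps)
  have g21: "cinner (A *v u2) (A *v u1) = cnj (cinner (A *v u1) (A *v u2))" by (rule cinner_commute)
  have "(norm (A *v (\<alpha> *s u1 + \<beta> *s u2)))^2 = Re (cinner (A *v (\<alpha> *s u1 + \<beta> *s u2)) (A *v (\<alpha> *s u1 + \<beta> *s u2)))"
    by (simp add: cinner_self)
  also have "\<dots> = Gm A u1 u2 p c"
    unfolding matvec_comb cinner_expand2 Gm_def ab c2 g21 by (simp add: algebra_simps)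
  finally show "(norm (A *v (\<alpha> *s u1 + \<beta> *s u2)))^2 = Gm A u1 u2 p c" .
qed

lemma conv2d:
  fixes A :: "complex^'n^'n"
  assumes o: "cinner u1 u1 = 1" "cinner u2 u2 = 1" "cinner u1 u2 = 0"
    and r: "0 \<le> r"
    and ball: "(cmod c0)^2 \<le> p0 * (1 - p0)"
    and G0: "r^2 \<le> Gm A u1 u2 p0 c0"
  shows "\<exists>z. norm z = 1 \<and> r \<le> norm (A *v z) \<and> qform A z = Fm A u1 u2 p0 c0"
proof -
  define k1 where "k1 = cinner u1 (A *v u1) - cinner u2 (A *v u2)"
  define k2 where "k2 = cinner u1 (A *v u2)"
  define k3 where "k3 = cinner u2 (A *v u1)"
  define g1 where "g1 = Re (cinner (A *v u1) (A *v u1)) - Re (cinner (A *v u2) (A *v u2))"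
  define g2 where "g2 = cinner (A *v u1) (A *v u2)"
  have Faff: "Fm A u1 u2 (p0 + s * dp) (c0 + of_real s * dc) =
      Fm A u1 u2 p0 c0 + of_real s * (of_real dp * k1 + dc * k2 + cnj dc * k3)" for s dp dc
    by (simp add: Fm_def k1_def k2_def k3_def algebra_simps)
  have Gaff: "Gm A u1 u2 (p0 + s * dp) (c0 + of_real s * dc) =
      Gm A u1 u2 p0 c0 + s * (dp * g1 + 2 * Re (dc * g2))" for s dp dc
    by (simp add: Gm_def g1_def g2_def algebra_simps)
  obtain dp dc where d: "(dp, dc) \<noteq> (0, 0)" "of_real dp * k1 + dc * k2 + cnj dc * k3 = 0"
    using kernel3 by blast
  obtain ep ec where e: "(ep, ec) \<noteq> (0, 0)" "of_real ep * k1 + ec * k2 + cnj ec * k3 = 0"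
      "ep * g1 + 2 * Re (ec * g2) \<ge> 0"
  proof (cases "dp * g1 + 2 * Re (dc * g2) \<ge> 0")
    case True then show ?thesis using that d by blast
  next
    case False
    have "of_real (-dp) * k1 + (-dc) * k2 + cnj (-dc) * k3 = - (of_real dp * k1 + dc * k2 + cnj dc * k3)"
      by (simp add: algebra_simps)
    then have "of_real (-dp) * k1 + (-dc) * k2 + cnj (-dc) * k3 = 0" using d(2) by simp
    moreover have "(-dp, -dc) \<noteq> (0, 0)" using d(1) by simp
    moreover have "(-dp) * g1 + 2 * Re ((-dc) * g2) \<ge> 0" using False by simp
    ultimately show ?thesis using that by blast
  qed
  define Q where "Q = (cmod ec)^2 + ep^2"
  define L where "L = 2 * Re (c0 * cnj ec) - ep + 2 * p0 * ep"
  define K where "K = (cmod c0)^2 - p0 * (1 - p0)"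
  have Qp: "Q > 0" using e(1) by (auto simp: Q_def add_pos_nonneg add_nonneg_pos)
  have Kn: "K \<le> 0" using ball by (simp add: K_def)
  obtain s where s: "s \<ge> 0" "Q * s^2 + L * s + K = 0" using quad_root[OF Qp Kn] by blast
  define p1 where "p1 = p0 + s * ep"
  define c1 where "c1 = c0 + of_real s * ec"
  have "(cmod c1)^2 - p1 * (1 - p1) = Q * s^2 + L * s + K"
    unfolding c1_def p1_def Q_def L_def K_def cmod_power2 by (simp add: power2_eq_square algebra_simps)
  then have pure: "(cmod c1)^2 = p1 * (1 - p1)" using s(2) by simp
  then have "p1 * (1 - p1) \<ge> 0" by (metis zero_le_power2)
  then have p1r: "0 \<le> p1" "p1 \<le> 1" by (auto simp: zero_le_mult_iff)
  obtain \<alpha> \<beta> where ab: "cnj \<alpha> * \<alpha> = of_real p1" "cnj \<beta> * \<beta> = of_real (1 - p1)" "cnj \<alpha> * \<beta> = c1"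
    using pure_param[OF p1r pure] by blast
  note pe = pure_eval(1)[OF o ab] pure_eval(2,3)[where A = A, OF o ab]
  have F1: "Fm A u1 u2 p1 c1 = Fm A u1 u2 p0 c0" unfolding p1_def c1_def Faff e(2) by simp
  have "Gm A u1 u2 p1 c1 \<ge> Gm A u1 u2 p0 c0" unfolding p1_def c1_def Gaff using mult_nonneg_nonneg[OF s(1) e(3)] by linarith
  then have "r^2 \<le> (norm (A *v (\<alpha> *s u1 + \<beta> *s u2)))^2" using pe(3) G0 by linarith
  then have rr: "r \<le> norm (A *v (\<alpha> *s u1 + \<beta> *s u2))" by (rule power2_le_imp_le) (rule norm_ge_zero)
  have "norm (\<alpha> *s u1 + \<beta> *s u2) = 1 \<and> r \<le> norm (A *v (\<alpha> *s u1 + \<beta> *s u2)) \<and>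
     qform A (\<alpha> *s u1 + \<beta> *s u2) = Fm A u1 u2 p0 c0"
    using pe(1) rr trans[OF pe(2) F1] by (intro conjI)
  then show ?thesis by (rule exI)
qed

lemma cinner_self_norm1: "norm x = 1 \<Longrightarrow> cinner x x = 1"
  by (simp add: cinner_self)

lemma Wset_convex:
  fixes A :: "complex^'n^'n"
  assumes r: "0 \<le> r"
  shows "convex (Wset r A)"
proof (rule convexI)
  fix w1 w2 and u v :: real
  assume w1: "w1 \<in> Wset r A" and w2: "w2 \<in> Wset r A" and u: "0 \<le> u" and v: "0 \<le> v" and uv: "u + v = 1"
  obtain x where x: "norm x = 1" "r \<le> norm (A *v x)" "w1 = qform A x" using w1 by (auto simp: Wset_def)
  obtain y where y: "norm y = 1" "r \<le> norm (A *v y)" "w2 = qform A y" using w2 by (auto simp: Wset_def)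
  have xx: "cinner x x = 1" and yy: "cinner y y = 1" using x(1) y(1) by (simp_all add: cinner_self_norm1)
  define a where "a = cinner x y"
  define y' where "y' = y - a *s x"
  show "u *\<^sub>R w1 + v *\<^sub>R w2 \<in> Wset r A"
  proof (cases "y' = 0")
    case True
    then have ya: "y = a *s x" by (simp add: y'_def)
    have "cnj a * a = 1" using yy xx unfolding ya cinner_scale_left cinner_scale_right by (simp add: mult.commute)
    then have "qform A y = qform A x"
      unfolding ya qform_cinner vector_scalar_commute cinner_scale_left cinner_scale_right
      by (simp add: mult.assoc[symmetric] mult.commute)
    then have "u *\<^sub>R w1 + v *\<^sub>R w2 = w1" using x(3) y(3) uv
      by (metis scaleR_add_left scaleR_one)
    then show ?thesis using w1 by simp
  next
    case False
    define e where "e = norm y'"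
    have ep: "e > 0" using False by (simp add: e_def)
    define u2 where "u2 = of_real (1 / e) *s y'"
    have y'y': "cinner y' y' = of_real (e^2)" by (simp add: e_def cinner_self)
    have u2u2: "cinner u2 u2 = 1"
      using ep unfolding u2_def cinner_scale_left cinner_scale_right y'y'
      by (simp add: power2_eq_square field_simps flip: of_real_mult)
    have xu2: "cinner x u2 = 0"
      unfolding u2_def y'_def cinner_scale_right cinner_diff_right xx a_def by simp
    have yd: "y = a *s x + of_real e *s u2"
      using ep by (simp add: u2_def y'_def vector_smult_assoc flip: of_real_mult)
    define pa where "pa = (cmod a)^2"
    define ca where "ca = cnj a * of_real e"
    have ab_y: "cnj a * a = of_real pa" "cnj a * of_real e = ca" by (simp_all add: pa_def ca_def cnj_mult_self)
    have "cinner y y = cnj a * a + of_real (e^2)"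
      unfolding yd cinner_expand2 xx u2u2 xu2 cinner_commute[of u2 x]
      by (simp add: power2_eq_square)
    then have "of_real pa + of_real (e^2) = (1::complex)" using yy ab_y by simp
    then have pae: "pa + e^2 = 1" by (metis of_real_1 of_real_add of_real_eq_iff)
    have ab_y2: "cnj (of_real e) * of_real e = (of_real (1 - pa) :: complex)"
    proof -
      have ee: "e * e = 1 - pa" using pae by (simp add: power2_eq_square)
      show ?thesis by (simp only: complex_cnj_complex_of_real of_real_mult[symmetric] ee)
    qed
    have ab_x: "cnj 1 * 1 = (of_real 1 :: complex)" "cnj 0 * 0 = (of_real (1 - 1) :: complex)" "cnj 1 * 0 = (0::complex)"
      by simp_all
    note ex = pure_eval(2,3)[where A = A, OF xx u2u2 xu2 ab_x]
    note ey = pure_eval(2,3)[where A = A, OF xx u2u2 xu2 ab_y(1) ab_y2 ab_y(2)]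
    have x1: "1 *s x + 0 *s u2 = x" by simp
    have w1F: "w1 = Fm A x u2 1 0" using ex(1) x(3) by (simp add: x1)
    have w2F: "w2 = Fm A x u2 pa ca" using ey(1) y(3) yd by simp
    have Gx: "r^2 \<le> Gm A x u2 1 0" using ex(2) power_mono[OF x(2) r, of 2] by (simp add: x1)
    have Gy: "r^2 \<le> Gm A x u2 pa ca" using ey(2) power_mono[OF y(2) r, of 2] yd by simp
    define p0 where "p0 = u + v * pa"
    define c0 where "c0 = of_real v * ca"
    have uv': "u = 1 - v" using uv by simp
    have F0: "u *\<^sub>R w1 + v *\<^sub>R w2 = Fm A x u2 p0 c0"
      unfolding w1F w2F Fm_def p0_def c0_def uv' scaleR_conv_of_real
      by (simp add: algebra_simps)
    have G0: "Gm A x u2 p0 c0 = u * Gm A x u2 1 0 + v * Gm A x u2 pa ca"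
      unfolding Gm_def p0_def c0_def uv' by (simp add: algebra_simps)
    have "u * r^2 + v * r^2 \<le> u * Gm A x u2 1 0 + v * Gm A x u2 pa ca"
      using Gx Gy u v by (intro add_mono mult_left_mono)
    moreover have "u * r^2 + v * r^2 = r^2" using uv by (metis distrib_right mult_1)
    ultimately have G0': "r^2 \<le> Gm A x u2 p0 c0" using G0 by linarith
    have "(cmod c0)^2 = v^2 * pa * e^2"
      by (simp add: c0_def ca_def pa_def norm_mult power_mult_distrib)
    also have "\<dots> \<le> (u + v * pa) * v * e^2"
      using u v by (intro mult_right_mono) (auto simp: power2_eq_square algebra_simps)
    also have "\<dots> = p0 * (1 - p0)"
    proof -
      have e2: "e^2 = 1 - pa" using pae by simp
      have "1 - p0 = v * e^2" unfolding e2 p0_def using uv by (simp add: algebra_simps)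
      then show ?thesis by (simp add: p0_def)
    qed
    finally have ball: "(cmod c0)^2 \<le> p0 * (1 - p0)" .
    obtain z where "norm z = 1" "r \<le> norm (A *v z)" "qform A z = Fm A x u2 p0 c0"
      using conv2d[OF xx u2u2 xu2 r ball G0'] by blast
    then show ?thesis unfolding F0 Wset_def by (metis (mono_tags, lifting) mem_Collect_eq)
  qed
qed

section \<open>Angles\<close>

lemma int_small:
  assumes "\<bar>2 * pi * real_of_int k\<bar> < 2 * pi"
  shows "k = 0"
proof -
  have "2 * pi * \<bar>real_of_int k\<bar> < 2 * pi * 1" using assms by (simp add: abs_mult)
  then have "\<bar>real_of_int k\<bar> < 1" using pi_gt_zero by (simp only: mult_less_cancel_left_pos)
  then show ?thesis by linarith
qed

lemma cis_shift: "cis (x + 2 * pi * real_of_int k) = cis x"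
  by (simp add: cis_mult[symmetric])

lemma cis_eq_int:
  assumes "cis s = cis t"
  shows "\<exists>k::int. s = t + 2 * pi * real_of_int k"
proof -
  have "sin s = sin t \<and> cos s = cos t" using assms by (simp add: complex_eq_iff)
  then show ?thesis using sin_cos_eq_iff by blast
qed

lemma same_angle:
  assumes "z \<noteq> 0" "z = of_real (cmod z) * cis s" "z = of_real (cmod z) * cis t"
  shows "\<exists>k::int. s = t + 2 * pi * real_of_int k"
proof -
  have "of_real (cmod z) * cis s = of_real (cmod z) * cis t" using assms by simp
  then have "cis s = cis t" using assms(1) by simp
  then show ?thesis by (rule cis_eq_int)
qed

lemma arg_rep:
  assumes "Re v > 0"
  shows "v = of_real (cmod v) * cis (arctan (Im v / Re v))"
proof -
  define u where "u = Im v / Re v"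
  have iv: "Im v = u * Re v" using assms by (simp add: u_def)
  have "cmod v = sqrt ((Re v)^2 * (1 + u^2))"
    by (simp add: cmod_def iv power_mult_distrib algebra_simps)
  also have "\<dots> = Re v * sqrt (1 + u^2)" using assms by (simp add: real_sqrt_mult)
  finally have cm: "cmod v = Re v * sqrt (1 + u^2)" .
  have sp: "sqrt (1 + u^2) > 0" by (simp add: add_pos_nonneg)
  show ?thesis
    unfolding u_def[symmetric]
    using sp by (simp add: complex_eq_iff cm cos_arctan sin_arctan iv)
qed

lemma angle_arc_iff:
  "angle_arc ((\<lambda>w. (Re w, Im w)) ` S) a b \<longleftrightarrow>
     a \<le> b \<and> b - a \<le> pi \<and> - pi < (a + b) / 2 \<and> (a + b) / 2 \<le> pi \<and>
     (\<forall>w\<in>S. \<exists>t. a \<le> t \<and> t \<le> b \<and> w = of_real (cmod w) * cis t) \<and>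
     (\<exists>w\<in>S. w = of_real (cmod w) * cis a) \<and>
     (\<exists>w\<in>S. w = of_real (cmod w) * cis b)"
  by (simp add: angle_arc_def)

lemma arc_unique:
  assumes z: "0 \<notin> S"
    and A1: "angle_arc ((\<lambda>w. (Re w, Im w)) ` S) a b"
    and A2: "angle_arc ((\<lambda>w. (Re w, Im w)) ` S) a' b'"
    and lt: "b - a < pi"
  shows "a' = a \<and> b' = b"
proof -
  note a1 = A1[unfolded angle_arc_iff] and a2 = A2[unfolded angle_arc_iff]
  have rep: "\<exists>t. lo \<le> t \<and> t \<le> hi \<and> (\<exists>k::int. x = t + 2 * pi * real_of_int k)"
    if h: "angle_arc ((\<lambda>w. (Re w, Im w)) ` S) lo hi" "w \<in> S" "w = of_real (cmod w) * cis x" for lo hi w x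
  proof -
    obtain t where t: "lo \<le> t" "t \<le> hi" "w = of_real (cmod w) * cis t"
      using h(1,2) unfolding angle_arc_iff by blast
    have "w \<noteq> 0" using z h(2) by auto
    then show ?thesis using same_angle[OF _ h(3) t(3)] t(1,2) by blast
  qed
  obtain w1 where w1: "w1 \<in> S" "w1 = of_real (cmod w1) * cis a'" using a2 by blast
  obtain s k1 where s: "a \<le> s" "s \<le> b" "a' = s + 2 * pi * real_of_int k1" using rep[OF A1 w1] by blast
  obtain w2 where w2: "w2 \<in> S" "w2 = of_real (cmod w2) * cis b'" using a2 by blast
  obtain u k2 where u: "a \<le> u" "u \<le> b" "b' = u + 2 * pi * real_of_int k2" using rep[OF A1 w2] by blast
  have "\<bar>2 * pi * real_of_int (k2 - k1)\<bar> < 2 * pi"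
    using s u a2 lt pi_gt_zero by (simp add: algebra_simps; linarith)
  then have k12: "k2 = k1" using int_small by fastforce
  obtain w3 where w3: "w3 \<in> S" "w3 = of_real (cmod w3) * cis a" using a1 by blast
  obtain t j where t: "a' \<le> t" "t \<le> b'" "a = t + 2 * pi * real_of_int j" using rep[OF A2 w3] by blast
  have "\<bar>2 * pi * real_of_int (j + k1)\<bar> < 2 * pi"
    using s u t k12 lt pi_gt_zero by (simp add: algebra_simps; linarith)
  then have "j + k1 = 0" by (rule int_small)
  then have sa: "s = a" using s u t k12 by (simp add: algebra_simps) (smt (verit) of_int_add of_int_0 mult_zero_right distrib_left)
  obtain w4 where w4: "w4 \<in> S" "w4 = of_real (cmod w4) * cis b" using a1 by blast
  obtain t' j' where t': "a' \<le> t'" "t' \<le> b'" "b = t' + 2 * pi * real_of_int j'" using rep[OF A2 w4] by blast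
  have "\<bar>2 * pi * real_of_int (j' + k1)\<bar> < 2 * pi"
    using s u t' k12 lt pi_gt_zero by (simp add: algebra_simps; linarith)
  then have "j' + k1 = 0" by (rule int_small)
  then have ub: "u = b" using s u t' k12 by (simp add: algebra_simps) (smt (verit) of_int_add of_int_0 mult_zero_right distrib_left)
  have "\<bar>2 * pi * real_of_int k1\<bar> < 2 * pi"
    using a1 a2 s u sa ub k12 by (simp add: algebra_simps; linarith)
  then have "k1 = 0" by (rule int_small)
  then show ?thesis using s u sa ub k12 by simp
qed

lemma shift_exists:
  fixes m :: real
  shows "\<exists>k::int. - pi < m + 2 * pi * real_of_int k \<and> m + 2 * pi * real_of_int k \<le> pi"
proof -
  define k where "k = floor ((pi - m) / (2 * pi))"
  have k1: "real_of_int k \<le> (pi - m) / (2 * pi)" unfolding k_def by linarith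
  have k2: "(pi - m) / (2 * pi) < real_of_int k + 1" unfolding k_def by linarith
  have "2 * pi * real_of_int k \<le> pi - m" using k1 pi_gt_zero by (simp add: field_simps)
  moreover have "pi - m < 2 * pi * real_of_int k + 2 * pi" using k2 pi_gt_zero by (simp add: field_simps)
  ultimately show ?thesis by (intro exI[of _ k]) (simp add: algebra_simps; linarith)
qed

lemma arc_exists:
  fixes S :: "complex set"
  assumes "compact S" "convex S" "S \<noteq> {}" "0 \<notin> S"
  shows "\<exists>a b. b - a < pi \<and> angle_arc ((\<lambda>w. (Re w, Im w)) ` S) a b"
proof -
  obtain c b0 where c: "c \<noteq> 0" "0 < b0" "\<forall>x\<in>S. inner c x > b0"
    using separating_hyperplane_closed_0[OF assms(2) compact_imp_closed[OF assms(1)] assms(4)] by blast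
  define \<gamma> where "\<gamma> = Arg c"
  have cc: "c = of_real (cmod c) * cis \<gamma>" unfolding \<gamma>_def by (metis rcis_cmod_Arg rcis_def)
  define rot where "rot w = cis (- \<gamma>) * w" for w
  have rotpos: "Re (rot w) > 0" if "w \<in> S" for w
  proof -
    have "inner c w = Re (cnj c * w)" by (simp add: inner_complex_def)
    also have "cnj c = of_real (cmod c) * cis (- \<gamma>)"
      by (subst cc) (simp add: cis_cnj)
    finally have "inner c w = cmod c * Re (rot w)" by (simp add: rot_def mult.assoc)
    then show ?thesis using c that by (smt (verit) mult_nonneg_nonpos norm_ge_zero)
  qed
  define ang where "ang w = \<gamma> + arctan (Im (rot w) / Re (rot w))" for w
  have rep: "w = of_real (cmod w) * cis (ang w)" if "w \<in> S" for w
  proof -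
    have "rot w = of_real (cmod (rot w)) * cis (arctan (Im (rot w) / Re (rot w)))"
      by (rule arg_rep[OF rotpos[OF that]])
    moreover have "cmod (rot w) = cmod w" by (simp add: rot_def norm_mult)
    moreover have "w = cis \<gamma> * rot w" by (simp add: rot_def cis_mult)
    ultimately show ?thesis by (simp add: ang_def cis_mult[symmetric] algebra_simps)
  qed
  have bnd: "\<gamma> - pi / 2 < ang w \<and> ang w < \<gamma> + pi / 2" for w
    using arctan_bounded[of "Im (rot w) / Re (rot w)"] by (simp add: ang_def)
  have cont: "continuous_on S ang"
    unfolding ang_def rot_def using rotpos unfolding rot_def
    by (intro continuous_intros) (auto, fastforce)
  obtain wa where wa: "wa \<in> S" "\<forall>w\<in>S. ang wa \<le> ang w"
    using continuous_attains_inf[OF assms(1,3) cont] by blast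
  obtain wb where wb: "wb \<in> S" "\<forall>w\<in>S. ang w \<le> ang wb"
    using continuous_attains_sup[OF assms(1,3) cont] by blast
  obtain k :: int where k: "- pi < (ang wa + ang wb) / 2 + 2 * pi * real_of_int k"
      "(ang wa + ang wb) / 2 + 2 * pi * real_of_int k \<le> pi"
    using shift_exists by blast
  define a where "a = ang wa + 2 * pi * real_of_int k"
  define b where "b = ang wb + 2 * pi * real_of_int k"
  have lt: "b - a < pi" using bnd[of wa] bnd[of wb] by (simp add: a_def b_def)
  have "angle_arc ((\<lambda>w. (Re w, Im w)) ` S) a b"
    unfolding angle_arc_iff
  proof (intro conjI)
    show "a \<le> b" using wa wb by (simp add: a_def b_def)
    show "b - a \<le> pi" using lt by simp
    show "- pi < (a + b) / 2" "(a + b) / 2 \<le> pi" using k by (simp_all add: a_def b_def field_simps)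
    show "\<forall>w\<in>S. \<exists>t\<ge>a. t \<le> b \<and> w = complex_of_real (cmod w) * cis t"
    proof
      fix w assume w: "w \<in> S"
      have "w = of_real (cmod w) * cis (ang w + 2 * pi * real_of_int k)"
        using rep[OF w] by (simp add: cis_shift)
      then show "\<exists>t\<ge>a. t \<le> b \<and> w = complex_of_real (cmod w) * cis t"
        using wa(2) wb(2) w by (intro exI[of _ "ang w + 2 * pi * real_of_int k"]) (simp add: a_def b_def)
    qed
    show "\<exists>w\<in>S. w = complex_of_real (cmod w) * cis a"
      using rep[OF wa(1)] wa(1) by (intro bexI[of _ wa]) (simp_all add: a_def cis_shift)
    show "\<exists>w\<in>S. w = complex_of_real (cmod w) * cis b"
      using rep[OF wb(1)] wb(1) by (intro bexI[of _ wb]) (simp_all add: b_def cis_shift)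
  qed
  then show ?thesis using lt by blast
qed

lemma cont_qform: "continuous_on S (qform (A::complex^'n^'n))"
  unfolding qform_def
  by (intro continuous_intros linear_continuous_on matrix_vector_mul_bounded_linear)

lemma Wset_compact: "compact (Wset r (A::complex^'n^'n))"
proof -
  have eq: "Wset r A = qform A ` {x. norm x = 1 \<and> r \<le> norm (A *v x)}"
    by (auto simp: Wset_def)
  have cl: "closed {x::complex^'n. norm x = 1 \<and> r \<le> norm (A *v x)}"
    by (intro closed_Collect_conj closed_Collect_eq closed_Collect_le continuous_intros
        linear_continuous_on matrix_vector_mul_bounded_linear)
  have bd: "bounded {x::complex^'n. norm x = 1 \<and> r \<le> norm (A *v x)}"
    by (rule bounded_subset[of "cball 0 1"]) auto
  show ?thesis unfolding eq
    by (rule compact_continuous_image[OF cont_qform]) (simp add: compact_eq_bounded_closed cl bd)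
qed

lemma W_ge_eq:
  assumes "0 \<le> r"
  shows "W_ge r A = (\<lambda>w. (Re w, Im w)) ` Wset r A"
proof
  show "W_ge r A \<subseteq> (\<lambda>w. (Re w, Im w)) ` Wset r A"
  proof
    fix pq assume "pq \<in> W_ge r A"
    then obtain p q h x where pq: "pq = (p, q)" "h \<ge> r" "norm x = 1" "p = Re (qform A x)"
      "q = Im (qform A x)" "h^2 = (norm (A *v x))^2"
      unfolding W_ge_def DW_def by auto
    have "h = norm (A *v x)" using pq(2,6) assms
      by (metis norm_ge_zero order_trans power2_eq_iff_nonneg)
    then have "qform A x \<in> Wset r A" using pq by (auto simp: Wset_def)
    then show "pq \<in> (\<lambda>w. (Re w, Im w)) ` Wset r A" using pq by force
  qed
  show "(\<lambda>w. (Re w, Im w)) ` Wset r A \<subseteq> W_ge r A"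
  proof
    fix pq assume "pq \<in> (\<lambda>w. (Re w, Im w)) ` Wset r A"
    then obtain x where x: "pq = (Re (qform A x), Im (qform A x))" "norm x = 1" "r \<le> norm (A *v x)"
      unfolding Wset_def by auto
    have "(Re (qform A x), Im (qform A x), (norm (A *v x))^2) \<in> DW A"
      using x unfolding DW_def by blast
    then show "pq \<in> W_ge r A" using x unfolding W_ge_def by blast
  qed
qed

lemma num_range_Wset: "num_range A = Wset 0 A"
  by (auto simp: num_range_def Wset_def)

lemma r_sectorial_iff:
  assumes "0 \<le> r"
  shows "r_sectorial r A \<longleftrightarrow> 0 \<notin> Wset r A"
proof -
  have "(0, 0) \<in> (\<lambda>w. (Re w, Im w)) ` Wset r A \<longleftrightarrow> 0 \<in> Wset r A"
  proof
    assume "(0, 0) \<in> (\<lambda>w. (Re w, Im w)) ` Wset r A"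
    then obtain w where "w \<in> Wset r A" "Re w = 0" "Im w = 0" by auto
    then show "0 \<in> Wset r A" by (metis complex_eq_iff zero_complex.sel)
  next
    assume "0 \<in> Wset r A"
    then show "(0, 0) \<in> (\<lambda>w. (Re w, Im w)) ` Wset r A" by force
  qed
  then show ?thesis unfolding r_sectorial_def W_ge_eq[OF assms] by simp
qed

section \<open>Phases from a sectorial decomposition\<close>

definition dg :: "('n \<Rightarrow> complex) \<Rightarrow> complex^'n^'n" where
  "dg f = (\<chi> i j. if i = j then f i else 0)"

lemma dg_mult: "dg f *v y = (\<chi> k. f k * y $ k)"
proof -
  have "(\<Sum>j\<in>UNIV. (if i = j then f i else 0) * y $ j) = f i * y $ i" for i
  proof -
    have "(\<Sum>j\<in>UNIV. (if i = j then f i else 0) * y $ j) = (\<Sum>j\<in>UNIV. if i = j then f i * y $ j else 0)"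
      by (rule sum.cong) auto
    then show ?thesis by simp
  qed
  then show ?thesis by (simp add: dg_def matrix_vector_mult_def vec_eq_iff)
qed

lemma cinner_cnj_tr': "cinner u (cnj_tr M *v w) = cinner (M *v u) w"
  using cinner_cnj_tr[of u "cnj_tr M" w] by simp

lemma qform_congr: "qform (cnj_tr T ** D ** T) x = cinner (T *v x) (D *v (T *v x))"
  unfolding qform_cinner by (simp add: matrix_vector_mul_assoc[symmetric] cinner_cnj_tr')

lemma qform_dg:
  "qform (cnj_tr T ** dg f ** T) x = (\<Sum>k\<in>UNIV. of_real ((cmod ((T *v x) $ k))^2) * f k)"
proof -
  have aux: "cnj z * (a * z) = of_real ((cmod z)^2) * a" for z a :: complex
    by (metis cnj_mult_self mult.commute mult.left_commute)
  show ?thesis unfolding qform_congr dg_mult cinner_def by (rule sum.cong) (simp_all add: aux)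
qed

lemma poscomb_arc:
  fixes c :: "'k::finite \<Rightarrow> real" and th :: "'k \<Rightarrow> real"
  assumes c: "\<And>k. c k \<ge> 0" and k0: "c k0 > 0"
    and th: "\<And>k. lo \<le> th k \<and> th k \<le> hi" and lt: "hi - lo < pi"
  defines "w \<equiv> (\<Sum>k\<in>UNIV. of_real (c k) * cis (th k))"
  shows "w \<noteq> 0 \<and> (\<exists>t. lo \<le> t \<and> t \<le> hi \<and> w = of_real (cmod w) * cis t)"
proof -
  define m where "m = (lo + hi) / 2"
  define \<delta> where "\<delta> = (hi - lo) / 2"
  have d0: "0 \<le> \<delta>" using th[of k0] by (simp add: \<delta>_def)
  have d1: "\<delta> < pi / 2" using lt by (simp add: \<delta>_def)
  define v where "v = cis (- m) * w"
  have v: "v = (\<Sum>k\<in>UNIV. of_real (c k) * cis (th k - m))"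
  proof -
    have eqk: "cis (- m) * (of_real (c k) * cis (th k)) = of_real (c k) * cis (th k - m)" for k
    proof -
      have "cis (th k - m) = cis (th k) * cis (- m)" by (simp add: cis_mult)
      then show ?thesis by (simp add: mult_ac)
    qed
    show ?thesis unfolding v_def w_def sum_distrib_left by (rule sum.cong[OF refl]) (rule eqk)
  qed
  have phi: "- \<delta> \<le> th k - m \<and> th k - m \<le> \<delta>" for k using th[of k] unfolding m_def \<delta>_def by (simp add: field_simps)
  have cosd: "cos \<delta> > 0" using d0 d1 by (intro cos_gt_zero_pi) auto
  have cosk: "cos (th k - m) \<ge> cos \<delta>" for k
  proof -
    have "cos \<bar>th k - m\<bar> \<ge> cos \<delta>"
      using phi[of k] d1 by (intro cos_monotone_0_pi_le) auto
    then show ?thesis by (cases "th k - m \<ge> 0") (simp_all add: abs_if cos_minus[of "th k - m", symmetric])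
  qed
  have ReV: "Re v = (\<Sum>k\<in>UNIV. c k * cos (th k - m))" by (simp add: v Re_sum)
  have ImV: "Im v = (\<Sum>k\<in>UNIV. c k * sin (th k - m))" by (simp add: v Im_sum)
  have "Re v \<ge> c k0 * cos (th k0 - m)"
    unfolding ReV
    by (rule member_le_sum) (auto intro!: mult_nonneg_nonneg c order_trans[OF less_imp_le[OF cosd] cosk])
  moreover have "c k0 * cos (th k0 - m) > 0" using k0 cosd cosk[of k0] by simp
  ultimately have rep: "Re v > 0" by linarith
  have up: "sin (th k - m) * cos \<delta> \<le> sin \<delta> * cos (th k - m)" for k
  proof -
    have "0 \<le> sin (\<delta> - (th k - m))" using phi[of k] d1 by (intro sin_ge_zero) auto
    moreover have "sin (\<delta> - (th k - m)) = sin \<delta> * cos (th k - m) - cos \<delta> * sin (th k - m)" by (rule sin_diff)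
    moreover have "sin (th k - m) * cos \<delta> = cos \<delta> * sin (th k - m)" by (rule mult.commute)
    ultimately show ?thesis by linarith
  qed
  have lo': "- (sin (th k - m) * cos \<delta>) \<le> sin \<delta> * cos (th k - m)" for k
  proof -
    have "0 \<le> sin (\<delta> + (th k - m))" using phi[of k] d1 by (intro sin_ge_zero) auto
    moreover have "sin (\<delta> + (th k - m)) = sin \<delta> * cos (th k - m) + cos \<delta> * sin (th k - m)" by (rule sin_add)
    moreover have "sin (th k - m) * cos \<delta> = cos \<delta> * sin (th k - m)" by (rule mult.commute)
    ultimately show ?thesis by linarith
  qed
  have I1: "Im v * cos \<delta> \<le> sin \<delta> * Re v"
    unfolding ImV ReV sum_distrib_left sum_distrib_right
    by (rule sum_mono) (metis c mult.assoc mult.left_commute mult_left_mono up)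
  have I2: "- (Im v * cos \<delta>) \<le> sin \<delta> * Re v"
    unfolding ImV ReV sum_distrib_left sum_distrib_right sum_negf[symmetric]
    by (rule sum_mono) (metis c lo' mult.assoc mult.left_commute mult_left_mono mult_minus_left mult_minus_right)
  define u where "u = Im v / Re v"
  have "u \<le> tan \<delta>" using I1 rep cosd by (simp add: u_def tan_def field_simps)
  moreover have "- tan \<delta> \<le> u" using I2 rep cosd by (simp add: u_def tan_def field_simps)
  ultimately have au: "- \<delta> \<le> arctan u \<and> arctan u \<le> \<delta>"
    using arctan_tan[of \<delta>] d0 d1 arctan_le_iff arctan_minus
    by (smt (verit, best) pi_gt_zero)
  have vrep: "v = of_real (cmod v) * cis (arctan u)" unfolding u_def by (rule arg_rep[OF rep])
  have cmv: "cmod v = cmod w" by (simp add: v_def norm_mult)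
  have "w = cis m * v" by (simp add: v_def cis_mult)
  also have "\<dots> = of_real (cmod w) * cis (m + arctan u)" by (subst vrep) (simp add: cmv cis_mult algebra_simps)
  finally have "w = of_real (cmod w) * cis (m + arctan u)" .
  moreover have "lo \<le> m + arctan u" "m + arctan u \<le> hi" using au unfolding m_def \<delta>_def by (simp_all add: field_simps)
  moreover have "w \<noteq> 0" using rep by (auto simp: v_def)
  ultimately show ?thesis by blast
qed

lemma norm_one_cinner: "cinner x x = 1 \<Longrightarrow> norm x = 1"
proof -
  assume "cinner x x = 1"
  then have "of_real ((norm x)^2) = (1::complex)" by (simp add: cinner_self)
  then have "(norm x)^2 = 1" by (metis of_real_eq_1_iff)
  then show "norm x = 1" using norm_ge_zero[of x] by (simp add: power2_eq_1_iff)
qed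

lemma decomp_endpoint:
  fixes B T :: "complex^'n^'n"
  assumes inv: "invertible T" and Beq: "B = cnj_tr T ** dg (\<lambda>i. cis (\<theta> i)) ** T"
  shows "\<exists>w\<in>num_range B. w = of_real (cmod w) * cis (\<theta> k1)"
proof -
  obtain Ti where Ti: "T ** Ti = mat 1" "Ti ** T = mat 1" using inv unfolding invertible_def by blast
  define u where "u = Ti *v axis k1 1"
  have Tu: "T *v u = axis k1 1" by (simp add: u_def matrix_vector_mul_assoc Ti(1))
  have u0: "u \<noteq> 0" using Tu by (auto simp: axis_eq_0_iff)
  define nu where "nu = norm u"
  have nu: "nu > 0" using u0 by (simp add: nu_def)
  define x where "x = of_real (1 / nu) *s u"
  have "cinner x x = of_real (1/nu) * of_real (1/nu) * cinner u u"
    unfolding x_def cinner_scale_left cinner_scale_right by simp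
  also have "cinner u u = of_real (nu^2)" by (simp add: cinner_self nu_def)
  finally have "cinner x x = of_real ((1/nu) * (1/nu) * nu^2)" by simp
  then have "cinner x x = 1" using nu by (simp add: power2_eq_square)
  then have x1: "norm x = 1" by (rule norm_one_cinner)
  have Tx: "(T *v x) $ k = (if k = k1 then of_real (1 / nu) else 0)" for k
    by (simp add: x_def vector_scalar_commute Tu axis_def)
  have "qform B x = (\<Sum>k\<in>UNIV. of_real ((cmod ((T *v x) $ k))^2) * cis (\<theta> k))"
    unfolding Beq by (rule qform_dg)
  also have "\<dots> = (\<Sum>k\<in>UNIV. if k = k1 then of_real ((1 / nu)^2) * cis (\<theta> k1) else 0)"
    by (rule sum.cong) (auto simp: Tx nu norm_divide abs_of_pos[OF nu])
  also have "\<dots> = of_real ((1 / nu)^2) * cis (\<theta> k1)" by simp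
  finally have qx: "qform B x = of_real ((1 / nu)^2) * cis (\<theta> k1)" .
  have "cmod (qform B x) = (1/nu)^2" unfolding qx norm_mult norm_of_real norm_cis by simp
  then have "qform B x = of_real (cmod (qform B x)) * cis (\<theta> k1)" using qx by simp
  moreover have "qform B x \<in> num_range B" using x1 by (auto simp: num_range_def)
  ultimately show ?thesis by blast
qed

lemma decomp_arc:
  fixes B T :: "complex^'n^'n"
  assumes D: "sectorial_decomp B T \<theta>"
  shows "angle_arc ((\<lambda>w. (Re w, Im w)) ` num_range B) (Min (range \<theta>)) (Max (range \<theta>))"
proof -
  have inv: "invertible T" using D by (simp add: sectorial_decomp_def)
  have Beq: "B = cnj_tr T ** dg (\<lambda>i. cis (\<theta> i)) ** T" using D by (simp add: sectorial_decomp_def dg_def)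
  have sp: "Max (range \<theta>) - Min (range \<theta>) < pi"
    "- pi < (Max (range \<theta>) + Min (range \<theta>)) / 2"
    "(Max (range \<theta>) + Min (range \<theta>)) / 2 \<le> pi" using D by (simp_all add: sectorial_decomp_def)
  have fin: "finite (range \<theta>)" by simp
  have bnd: "Min (range \<theta>) \<le> \<theta> k \<and> \<theta> k \<le> Max (range \<theta>)" for k
    using fin by (auto intro: Min_le Max_ge)
  obtain Ti where Ti: "T ** Ti = mat 1" "Ti ** T = mat 1" using inv unfolding invertible_def by blast
  have Tinj: "x = 0" if "T *v x = 0" for x
  proof -
    have "x = Ti *v (T *v x)" by (simp add: matrix_vector_mul_assoc Ti(2))
    then show ?thesis using that by simp
  qed
  have "Max (range \<theta>) \<in> range \<theta>" using Max_in[OF fin] by simp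
  then obtain kmax where kmax: "\<theta> kmax = Max (range \<theta>)" by (metis rangeE)
  have "Min (range \<theta>) \<in> range \<theta>" using Min_in[OF fin] by simp
  then obtain kmin where kmin: "\<theta> kmin = Min (range \<theta>)" by (metis rangeE)
  show ?thesis unfolding angle_arc_iff
  proof (intro conjI)
    show "Min (range \<theta>) \<le> Max (range \<theta>)" using bnd[of kmax] by simp
    show "Max (range \<theta>) - Min (range \<theta>) \<le> pi" using sp by simp
    show "- pi < (Min (range \<theta>) + Max (range \<theta>)) / 2" "(Min (range \<theta>) + Max (range \<theta>)) / 2 \<le> pi"
      using sp by (simp_all add: add.commute)
    show "\<exists>w\<in>num_range B. w = of_real (cmod w) * cis (Min (range \<theta>))"
      using decomp_endpoint[OF inv Beq, of kmin] kmin by simp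
    show "\<exists>w\<in>num_range B. w = of_real (cmod w) * cis (Max (range \<theta>))"
      using decomp_endpoint[OF inv Beq, of kmax] kmax by simp
    show "\<forall>w\<in>num_range B. \<exists>t\<ge>Min (range \<theta>). t \<le> Max (range \<theta>) \<and> w = of_real (cmod w) * cis t"
    proof
      fix w assume "w \<in> num_range B"
      then obtain x where x: "norm x = 1" "w = qform B x" by (auto simp: num_range_def)
      have "T *v x \<noteq> 0" using x(1) Tinj by (metis norm_zero zero_neq_one)
      then obtain k0 where k0: "(T *v x) $ k0 \<noteq> 0" by (auto simp: vec_eq_iff)
      have w: "w = (\<Sum>k\<in>UNIV. of_real ((cmod ((T *v x) $ k))^2) * cis (\<theta> k))"
        unfolding x(2) Beq by (rule qform_dg)
      have "w \<noteq> 0 \<and> (\<exists>t. Min (range \<theta>) \<le> t \<and> t \<le> Max (range \<theta>) \<and> w = of_real (cmod w) * cis t)"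
        unfolding w by (rule poscomb_arc[of _ k0]) (use k0 bnd sp in auto)
      then show "\<exists>t\<ge>Min (range \<theta>). t \<le> Max (range \<theta>) \<and> w = of_real (cmod w) * cis t" by blast
    qed
  qed
qed

section \<open>Hermitian forms and simultaneous diagonalisation\<close>

lemma herm_move:
  assumes "cnj_tr M = M"
  shows "cinner u (M *v w) = cinner (M *v u) w"
  using cinner_cnj_tr[of u M w] assms by simp

lemma herm_swap:
  assumes "cnj_tr M = M"
  shows "cinner u (M *v w) = cnj (cinner w (M *v u))"
  using herm_move[OF assms, of u w] cinner_commute[of "M *v u" w] by simp

lemma qform_real:
  assumes "cnj_tr M = M"
  shows "qform M x = of_real (Re (qform M x))"
proof -
  have "cnj (qform M x) = qform M x" unfolding qform_cinner using herm_swap[OF assms, of x x] by simp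
  then have "Im (qform M x) = 0" by (metis Reals_cnj_iff complex_is_Real_iff)
  then show ?thesis by (simp add: complex_eq_iff)
qed

lemma qform_scale: "qform M (c *s x) = cnj c * c * qform M x"
  unfolding qform_cinner vector_scalar_commute cinner_scale_left cinner_scale_right by simp

lemma qform_add: "qform M (v + w) = qform M v + cinner v (M *v w) + cinner w (M *v v) + qform M w"
  unfolding qform_cinner matrix_vector_right_distrib cinner_add_left cinner_add_right by simp

lemma qform_zero [simp]: "qform M 0 = 0"
  by (simp add: qform_def)

lemma cont_cinnerM: "continuous_on S (\<lambda>w. cinner u ((M::complex^'n^'n) *v w))"
  unfolding cinner_def
  by (intro continuous_intros linear_continuous_on matrix_vector_mul_bounded_linear)

lemma ofreal_smult: "(of_real c :: complex) *s x = c *\<^sub>R x"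
proof -
  have "((of_real c :: complex) *s x) $ i = (c *\<^sub>R x) $ i" for i
    by (simp only: vector_smult_component vector_scaleR_component) (simp add: scaleR_conv_of_real)
  then show ?thesis by (simp add: vec_eq_iff)
qed

lemma norm_ofreal_smult: "norm ((of_real c :: complex) *s x) = \<bar>c\<bar> * norm x"
  by (simp add: ofreal_smult)

lemma quad_zero:
  fixes a b :: real
  assumes a: "a \<ge> 0" and q: "\<And>t. 0 \<le> a * t^2 + 2 * b * t"
  shows "b = 0"
proof (rule ccontr)
  assume b: "b \<noteq> 0"
  define s where "s = a + 1"
  have s0: "s \<noteq> 0" "s > 0" using a by (simp_all add: s_def)
  define t where "t = - b / s"
  have "a * t^2 + 2 * b * t = (b^2 / s^2) * (a - 2 * s)"
    using s0 by (simp add: t_def field_simps power2_eq_square)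
  moreover have "b^2 / s^2 > 0" using b s0 by simp
  moreover have "a - 2 * s < 0" using a by (simp add: s_def)
  ultimately have "a * t^2 + 2 * b * t < 0" by (metis mult_pos_neg times_divide_eq_left mult.commute)
  then show False using q[of t] by simp
qed

lemma coercive:
  fixes H :: "complex^'n^'n"
  assumes pos: "\<And>x. x \<noteq> 0 \<Longrightarrow> Re (qform H x) > 0"
  shows "\<exists>cH>0. \<forall>x. Re (qform H x) \<ge> cH * (norm x)^2"
proof -
  have cont: "continuous_on (sphere 0 1) (\<lambda>x. Re (qform H x))"
    by (intro continuous_intros cont_qform)
  have ne: "sphere (0::complex^'n) 1 \<noteq> {}" by simp
  obtain x0 where x0: "x0 \<in> sphere 0 1" "\<forall>x\<in>sphere 0 1. Re (qform H x0) \<le> Re (qform H x)"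
    using continuous_attains_inf[OF compact_sphere ne cont] by blast
  have cpos: "Re (qform H x0) > 0" using x0(1) pos by (metis mem_sphere_0 norm_zero zero_neq_one)
  have "Re (qform H x) \<ge> Re (qform H x0) * (norm x)^2" for x
  proof (cases "x = 0")
    case True then show ?thesis by simp
  next
    case False
    define xh where "xh = (of_real (1 / norm x) :: complex) *s x"
    have "norm xh = 1" using False unfolding xh_def norm_ofreal_smult by simp
    then have le: "Re (qform H x0) \<le> Re (qform H xh)" using x0(2) by simp
    have "qform H xh = of_real ((1 / norm x)^2) * qform H x"
      by (simp add: xh_def qform_scale power2_eq_square)
    then have "Re (qform H xh) = Re (qform H x) / (norm x)^2" by (simp add: field_simps)
    then have "Re (qform H x) = Re (qform H xh) * (norm x)^2" using False by (simp add: field_simps)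
    then show ?thesis using le by (simp add: mult_right_mono)
  qed
  then show ?thesis using cpos by blast
qed

lemma qform_line:
  assumes "cnj_tr M = M"
  shows "Re (qform M (v + (of_real t :: complex) *s w)) =
    Re (qform M v) + 2 * t * Re (cinner v (M *v w)) + t^2 * Re (qform M w)"
proof -
  have sw: "cinner w (M *v v) = cnj (cinner v (M *v w))" by (rule herm_swap[OF assms])
  show ?thesis
    unfolding qform_add qform_scale
    unfolding qform_cinner vector_scalar_commute cinner_scale_left cinner_scale_right sw
    by (simp add: power2_eq_square algebra_simps)
qed

lemma qform_ofreal_scale: "qform M ((of_real a :: complex) *s w) = of_real (a * a) * qform M w"
  by (simp add: qform_scale)

lemma simul_family:
  fixes H K :: "complex^'n^'n"
  assumes hH: "cnj_tr H = H" and hK: "cnj_tr K = K" and pos: "\<And>x. x \<noteq> 0 \<Longrightarrow> Re (qform H x) > 0"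
  shows "\<exists>v::'n \<Rightarrow> complex^'n. (\<forall>i\<in>I. \<forall>j\<in>I. cinner (v i) (H *v v j) = (if i = j then 1 else 0)) \<and>
      (\<forall>i\<in>I. \<forall>j\<in>I. i \<noteq> j \<longrightarrow> cinner (v i) (K *v v j) = 0) \<and>
      (\<forall>w. (\<forall>i\<in>I. cinner (v i) (H *v w) = 0) \<longrightarrow> (\<forall>i\<in>I. cinner (v i) (K *v w) = 0))"
proof -
  obtain cH where cH: "cH > 0" "\<And>x. Re (qform H x) \<ge> cH * (norm x)^2" using coercive[OF pos] by blast
  have "finite I" by simp
  then show ?thesis
  proof (induction I rule: finite_induct)
    case empty then show ?case by simp
  next
    case (insert j I)
    from insert.IH obtain v where
      v1: "\<forall>i\<in>I. \<forall>j\<in>I. cinner (v i) (H *v v j) = (if i = j then 1 else 0)" and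
      v2: "\<forall>i\<in>I. \<forall>j\<in>I. i \<noteq> j \<longrightarrow> cinner (v i) (K *v v j) = 0" and
      v3: "\<forall>w. (\<forall>i\<in>I. cinner (v i) (H *v w) = 0) \<longrightarrow> (\<forall>i\<in>I. cinner (v i) (K *v w) = 0)" by blast
    define V where "V = {w. \<forall>i\<in>I. cinner (v i) (H *v w) = 0}"
    have V_add: "w1 + w2 \<in> V" if "w1 \<in> V" "w2 \<in> V" for w1 w2
      using that by (simp add: V_def matrix_vector_right_distrib cinner_add_right)
    have V_scale: "c *s w \<in> V" if "w \<in> V" for c w
      using that by (simp add: V_def vector_scalar_commute cinner_scale_right)
    have cardI: "card I < CARD('n)"
    proof -
      have "card (insert j I) \<le> CARD('n)" by (rule card_mono) auto
      then show ?thesis using insert.hyps by simp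
    qed
    obtain w0 where w0: "w0 \<in> V" "w0 \<noteq> 0"
    proof -
      define S where "S = (\<lambda>i. H *v v i) ` I \<union> (\<lambda>i. \<i> *s (H *v v i)) ` I"
      have "dim S \<le> card S" by (rule dim_le_card') (simp add: S_def)
      also have "card S \<le> card I + card I"
        unfolding S_def by (meson card_Un_le card_image_le finite order_trans add_mono)
      also have "\<dots> < DIM(complex^'n)" using cardI by simp
      finally obtain x where x: "x \<noteq> 0" "\<And>y. y \<in> span S \<Longrightarrow> orthogonal x y"
        using orthogonal_to_subspace_exists by blast
      have "\<forall>i\<in>I. cinner (v i) (H *v x) = 0"
      proof
        fix i assume i: "i \<in> I"
        have o1: "inner x (H *v v i) = 0" using x(2)[of "H *v v i"] i by (simp add: S_def span_base orthogonal_def)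
        have o2: "inner x (\<i> *s (H *v v i)) = 0"
          using x(2)[of "\<i> *s (H *v v i)"] i by (simp add: S_def span_base orthogonal_def)
        define z where "z = cinner (H *v v i) x"
        have rz: "Re z = 0" using o1 by (simp add: z_def Re_cinner inner_commute)
        have "inner (\<i> *s (H *v v i)) x = Re (cnj \<i> * z)"
          by (simp only: Re_cinner[symmetric] cinner_scale_left z_def)
        then have "Im z = 0" using o2 by (simp add: inner_commute)
        then have "z = 0" using rz by (simp add: complex_eq_iff)
        then show "cinner (v i) (H *v x) = 0" by (simp add: z_def herm_move[OF hH])
      qed
      then have "x \<in> V" by (simp add: V_def)
      then show ?thesis using that x(1) by blast
    qed
    define M where "M = {w \<in> V. Re (qform H w) = 1}"
    have normalize: "(of_real (1 / sqrt (Re (qform H w))) :: complex) *s w \<in> M" if "w \<in> V" "w \<noteq> 0" for w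
    proof -
      have t: "Re (qform H w) > 0" using pos that(2) by blast
      have "Re (qform H ((of_real (1 / sqrt (Re (qform H w))) :: complex) *s w)) =
          (1 / sqrt (Re (qform H w))) * (1 / sqrt (Re (qform H w))) * Re (qform H w)"
        unfolding qform_ofreal_scale by simp
      also have "\<dots> = 1" using t by (simp add: field_simps)
      finally show ?thesis using V_scale that(1) by (simp add: M_def)
    qed
    have M_ne: "M \<noteq> {}" using normalize[OF w0] by blast
    have M_closed: "closed M"
    proof -
      have "M = (\<Inter>i\<in>I. {w. cinner (v i) (H *v w) = 0}) \<inter> {w. Re (qform H w) = 1}"
        by (auto simp: M_def V_def)
      moreover have "closed {w. cinner (v i) (H *v w) = 0}" for i
        by (intro closed_Collect_eq cont_cinnerM continuous_on_const)
      moreover have "closed {w::complex^'n. Re (qform H w) = 1}"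
        by (intro closed_Collect_eq continuous_intros cont_qform)
      ultimately show ?thesis by auto
    qed
    have M_bounded: "bounded M"
    proof -
      have "norm w \<le> 1 + 1 / cH" if "w \<in> M" for w
      proof -
        have "cH * (norm w)^2 \<le> 1" using cH(2)[of w] that by (simp add: M_def)
        then have n2: "(norm w)^2 \<le> 1 / cH" using cH(1) by (simp add: field_simps)
        show ?thesis
        proof (cases "norm w \<le> 1")
          case True then show ?thesis using cH(1) by (smt (verit) divide_pos_pos)
        next
          case False
          then have "norm w * 1 \<le> norm w * norm w" by (intro mult_left_mono) simp_all
          then have "norm w \<le> (norm w)^2" by (simp add: power2_eq_square)
          then show ?thesis using n2 by simp
        qed
      qed
      then show ?thesis by (metis bounded_iff)
    qed
    have M_compact: "compact M" using M_closed M_bounded by (simp add: compact_eq_bounded_closed)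
    have contK: "continuous_on M (\<lambda>w. Re (qform K w))" by (intro continuous_intros cont_qform)
    obtain v0 where v0: "v0 \<in> M" "\<forall>w\<in>M. Re (qform K w) \<le> Re (qform K v0)"
      using continuous_attains_sup[OF M_compact M_ne contK] by blast
    define lam where "lam = Re (qform K v0)"
    have v0V: "v0 \<in> V" and hv0: "Re (qform H v0) = 1" using v0(1) by (simp_all add: M_def)
    have ineq: "Re (qform K w) \<le> lam * Re (qform H w)" if "w \<in> V" for w
    proof (cases "w = 0")
      case True then show ?thesis by simp
    next
      case False
      define t where "t = Re (qform H w)"
      have t: "t > 0" using pos False by (simp add: t_def)
      have "Re (qform K ((of_real (1 / sqrt t) :: complex) *s w)) \<le> lam"
        using v0(2) normalize[OF that False] by (simp add: lam_def t_def)
      then have "(1 / sqrt t) * (1 / sqrt t) * Re (qform K w) \<le> lam"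
        unfolding qform_ofreal_scale by simp
      then have "Re (qform K w) / t \<le> lam" using t by (simp add: field_simps)
      then show ?thesis using t by (simp add: t_def field_simps)
    qed
    have reqz: "lam * Re (cinner v0 (H *v w)) - Re (cinner v0 (K *v w)) = 0" if "w \<in> V" for w
    proof -
      define R where "R x = lam * Re (qform H x) - Re (qform K x)" for x
      have R0: "R x \<ge> 0" if "x \<in> V" for x using ineq[OF that] by (simp add: R_def)
      have "0 \<le> R w * t^2 + 2 * (lam * Re (cinner v0 (H *v w)) - Re (cinner v0 (K *v w))) * t" for t
      proof -
        have "v0 + (of_real t :: complex) *s w \<in> V" using V_add V_scale v0V that by blast
        then have "0 \<le> R (v0 + (of_real t :: complex) *s w)" by (rule R0)
        also have "R (v0 + (of_real t :: complex) *s w) = R w * t^2 + 2 * (lam * Re (cinner v0 (H *v w)) - Re (cinner v0 (K *v w))) * t"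
          unfolding R_def qform_line[OF hH] qform_line[OF hK] hv0 lam_def by (simp add: algebra_simps)
        finally show ?thesis .
      qed
      then show ?thesis using quad_zero[of "R w"] R0[OF that] by blast
    qed
    have key: "cinner v0 (K *v w) = of_real lam * cinner v0 (H *v w)" if "w \<in> V" for w
    proof -
      define z where "z = of_real lam * cinner v0 (H *v w) - cinner v0 (K *v w)"
      have rz: "Re z = 0" using reqz[OF that] by (simp add: z_def)
      have "Re (\<i> * z) = 0"
        using reqz[OF V_scale[OF that, of "\<i>"]]
        by (simp add: z_def vector_scalar_commute cinner_scale_right algebra_simps)
      then have "Im z = 0" by simp
      then have "z = 0" using rz by (simp add: complex_eq_iff)
      then show ?thesis by (simp add: z_def)
    qed
    have Hv0: "cinner v0 (H *v v0) = 1" using hv0 qform_real[OF hH, of v0] by (simp add: qform_cinner)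
    define v' where "v' = v(j := v0)"
    have jI: "j \<notin> I" using insert.hyps by simp
    have c1: "\<forall>i\<in>insert j I. \<forall>k\<in>insert j I. cinner (v' i) (H *v v' k) = (if i = k then 1 else 0)"
    proof (intro ballI)
      fix i k assume i: "i \<in> insert j I" and k: "k \<in> insert j I"
      show "cinner (v' i) (H *v v' k) = (if i = k then 1 else 0)"
      proof (cases "i = j"; cases "k = j")
        assume "i = j" "k = j" then show ?thesis using Hv0 by (simp add: v'_def)
      next
        assume "i = j" "k \<noteq> j"
        then have "k \<in> I" using k by simp
        then have "cinner (v k) (H *v v0) = 0" using v0V by (simp add: V_def)
        then show ?thesis using \<open>i = j\<close> \<open>k \<noteq> j\<close> herm_swap[OF hH, of v0 "v k"] by (simp add: v'_def)
      next
        assume "i \<noteq> j" "k = j"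
        then have "i \<in> I" using i by simp
        then show ?thesis using \<open>i \<noteq> j\<close> \<open>k = j\<close> v0V by (simp add: v'_def V_def)
      next
        assume "i \<noteq> j" "k \<noteq> j"
        then show ?thesis using i k v1 by (simp add: v'_def)
      qed
    qed
    have v3v0: "\<forall>i\<in>I. cinner (v i) (K *v v0) = 0" using v3 v0V by (simp add: V_def)
    have c2: "\<forall>i\<in>insert j I. \<forall>k\<in>insert j I. i \<noteq> k \<longrightarrow> cinner (v' i) (K *v v' k) = 0"
    proof (intro ballI impI)
      fix i k assume i: "i \<in> insert j I" and k: "k \<in> insert j I" and ik: "i \<noteq> k"
      show "cinner (v' i) (K *v v' k) = 0"
      proof (cases "i = j")
        case True
        then have "k \<in> I" "k \<noteq> j" using k ik by auto
        then show ?thesis using True v3v0 herm_swap[OF hK, of v0 "v k"] by (simp add: v'_def)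
      next
        case False
        then have iI: "i \<in> I" using i by simp
        show ?thesis
        proof (cases "k = j")
          case True then show ?thesis using False iI v3v0 by (simp add: v'_def)
        next
          case kj: False
          then show ?thesis using False iI k ik v2 by (simp add: v'_def)
        qed
      qed
    qed
    have c3: "\<forall>w. (\<forall>i\<in>insert j I. cinner (v' i) (H *v w) = 0) \<longrightarrow> (\<forall>i\<in>insert j I. cinner (v' i) (K *v w) = 0)"
    proof (intro allI impI ballI)
      fix w i assume hw: "\<forall>i\<in>insert j I. cinner (v' i) (H *v w) = 0" and i: "i \<in> insert j I"
      have wV: "w \<in> V" unfolding V_def
      proof (intro CollectI ballI)
        fix i assume "i \<in> I"
        then show "cinner (v i) (H *v w) = 0" using hw jI by (metis fun_upd_other insertCI v'_def)
      qed
      have hj: "cinner v0 (H *v w) = 0" using hw by (simp add: v'_def)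
      show "cinner (v' i) (K *v w) = 0"
      proof (cases "i = j")
        case True then show ?thesis using key[OF wV] hj by (simp add: v'_def)
      next
        case False
        then have "i \<in> I" using i by simp
        then show ?thesis using v3 wV False by (simp add: V_def v'_def)
      qed
    qed
    show ?case using c1 c2 c3 by blast
  qed
qed

section \<open>Existence of a sectorial decomposition\<close>

lemma congr_dg_entry:
  "(cnj_tr T ** dg f ** T) $ a $ b = (\<Sum>k\<in>UNIV. cnj (T $ k $ a) * f k * T $ k $ b)"
  unfolding congr_entry dg_mult cinner_def column_def by (simp add: mult.assoc)

lemma dg_mult_mat: "dg f ** M = (\<chi> k j. f k * M $ k $ j)"
proof -
  have "(\<Sum>l\<in>UNIV. (if k = l then f k else 0) * M $ l $ j) = f k * M $ k $ j" for k j
  proof -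
    have "(\<Sum>l\<in>UNIV. (if k = l then f k else 0) * M $ l $ j) = (\<Sum>l\<in>UNIV. if k = l then f k * M $ l $ j else 0)"
      by (rule sum.cong) auto
    then show ?thesis by simp
  qed
  then show ?thesis by (simp add: dg_def matrix_matrix_mult_def vec_eq_iff)
qed

lemma dg_invertible:
  assumes "\<And>k. f k \<noteq> 0"
  shows "invertible (dg f)"
proof -
  have "dg f ** dg (\<lambda>k. inverse (f k)) = mat 1" "dg (\<lambda>k. inverse (f k)) ** dg f = mat 1"
    unfolding dg_mult_mat using assms by (auto simp: vec_eq_iff dg_def mat_def)
  then show ?thesis unfolding invertible_def by blast
qed

lemma rescale_lemma:
  fixes T :: "complex^'n^'n"
  assumes inv: "invertible T" and f: "\<And>k. f k = of_real (\<rho> k) * cis (\<phi> k)" and rho: "\<And>k. \<rho> k > 0"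
  shows "\<exists>T'. invertible T' \<and> cnj_tr T ** dg f ** T = cnj_tr T' ** dg (\<lambda>k. cis (\<phi> k)) ** T'"
proof -
  define s where "s k = (of_real (sqrt (\<rho> k)) :: complex)" for k
  define T' where "T' = dg s ** T"
  have s0: "s k \<noteq> 0" for k using rho[of k] by (simp add: s_def)
  have inv': "invertible T'" unfolding T'_def by (rule invertible_mult[OF dg_invertible[OF s0] inv])
  have T'e: "T' $ k $ j = s k * T $ k $ j" for k j by (simp add: T'_def dg_mult_mat)
  have ss: "cnj (s k) * s k = of_real (\<rho> k)" for k
    using rho[of k] by (simp add: s_def flip: of_real_mult)
  have "cnj_tr T ** dg f ** T = cnj_tr T' ** dg (\<lambda>k. cis (\<phi> k)) ** T'"
  proof -
    have "(cnj_tr T ** dg f ** T) $ a $ b = (cnj_tr T' ** dg (\<lambda>k. cis (\<phi> k)) ** T') $ a $ b" for a b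
      unfolding congr_dg_entry T'e
    proof (rule sum.cong[OF refl])
      fix k
      have "cnj (s k * T $ k $ a) * cis (\<phi> k) * (s k * T $ k $ b) =
          cnj (T $ k $ a) * ((cnj (s k) * s k) * cis (\<phi> k)) * T $ k $ b" by (simp add: mult_ac)
      also have "\<dots> = cnj (T $ k $ a) * f k * T $ k $ b" by (simp add: ss f)
      finally show "cnj (T $ k $ a) * f k * T $ k $ b = cnj (s k * T $ k $ a) * cis (\<phi> k) * (s k * T $ k $ b)" by (rule sym)
    qed
    then show ?thesis by (simp add: vec_eq_iff)
  qed
  then show ?thesis using inv' by blast
qed

lemma shift_lemma:
  fixes \<phi> :: "'n::finite \<Rightarrow> real"
  assumes "\<And>k. L < \<phi> k \<and> \<phi> k < L + pi"
  shows "\<exists>\<theta>. (\<forall>k. cis (\<theta> k) = cis (\<phi> k)) \<and> Max (range \<theta>) - Min (range \<theta>) < pi \<and>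
     - pi < (Max (range \<theta>) + Min (range \<theta>)) / 2 \<and> (Max (range \<theta>) + Min (range \<theta>)) / 2 \<le> pi"
proof -
  have fin: "finite (range \<phi>)" by simp
  have "Max (range \<phi>) \<in> range \<phi>" using Max_in[OF fin] by simp
  then obtain k1 where k1: "\<phi> k1 = Max (range \<phi>)" by (metis rangeE)
  have "Min (range \<phi>) \<in> range \<phi>" using Min_in[OF fin] by simp
  then obtain k2 where k2: "\<phi> k2 = Min (range \<phi>)" by (metis rangeE)
  have sp: "Max (range \<phi>) - Min (range \<phi>) < pi" using assms[of k1] assms[of k2] unfolding k1[symmetric] k2[symmetric] by linarith
  obtain m :: int where m: "- pi < (Max (range \<phi>) + Min (range \<phi>)) / 2 + 2 * pi * real_of_int m"
    "(Max (range \<phi>) + Min (range \<phi>)) / 2 + 2 * pi * real_of_int m \<le> pi"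
    using shift_exists by blast
  define \<theta> where "\<theta> k = \<phi> k + 2 * pi * real_of_int m" for k
  have mx: "Max (range \<theta>) = Max (range \<phi>) + 2 * pi * real_of_int m"
    unfolding \<theta>_def by (rule Max_add_commute) simp_all
  have mn: "Min (range \<theta>) = Min (range \<phi>) + 2 * pi * real_of_int m"
    unfolding \<theta>_def by (rule Min_add_commute) simp_all
  have "\<forall>k. cis (\<theta> k) = cis (\<phi> k)" by (simp add: \<theta>_def cis_shift)
  moreover have "Max (range \<theta>) - Min (range \<theta>) < pi" using sp by (simp add: mx mn)
  moreover have "- pi < (Max (range \<theta>) + Min (range \<theta>)) / 2" "(Max (range \<theta>) + Min (range \<theta>)) / 2 \<le> pi"
    using m by (simp_all add: mx mn field_simps)
  ultimately show ?thesis by blast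
qed

lemma polar_div:
  assumes "r2 \<noteq> 0"
  shows "(of_real r1 * cis a) / (of_real r2 * cis b) = (of_real (r1 / r2) :: complex) * cis (a - b)"
proof -
  have "cis (a - b) = cis a / cis b" by (simp add: cis_divide)
  then show ?thesis using assms by (simp add: field_simps)
qed

lemma decomp_exists:
  fixes B :: "complex^'n^'n"
  assumes sec: "sectorial B"
  shows "\<exists>T \<theta>. sectorial_decomp B T \<theta>"
proof -
  have S0: "0 \<notin> Wset 0 B" using sec by (simp add: sectorial_def num_range_Wset)
  obtain c b0 where c: "c \<noteq> 0" "0 < b0" "\<forall>w\<in>Wset 0 B. inner c w > b0"
    using separating_hyperplane_closed_0[OF Wset_convex[of 0 B] compact_imp_closed[OF Wset_compact] S0] by auto
  define ca where "ca = cnj c"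
  have ca0: "ca \<noteq> 0" using c(1) by (simp add: ca_def)
  have posB: "Re (ca * qform B x) > 0" if "norm x = 1" for x
  proof -
    have "qform B x \<in> Wset 0 B" using that by (auto simp: Wset_def)
    then have "inner c (qform B x) > b0" using c(3) by blast
    moreover have "inner c (qform B x) = Re (ca * qform B x)" by (simp add: ca_def inner_complex_def)
    ultimately show ?thesis using c(2) by simp
  qed
  define H :: "complex^'n^'n" where "H = (\<chi> i j. (ca * B$i$j + cnj (ca * B$j$i)) / 2)"
  define K :: "complex^'n^'n" where "K = (\<chi> i j. (ca * B$i$j - cnj (ca * B$j$i)) / (2 * \<i>))"
  have hH: "cnj_tr H = H" by (simp add: H_def cnj_tr_def vec_eq_iff add.commute)
  have hK: "cnj_tr K = K" by (simp add: K_def cnj_tr_def vec_eq_iff field_simps)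
  have HKe: "H$i$j + \<i> * K$i$j = ca * B$i$j" for i j by (simp add: H_def K_def field_simps)
  have HK: "ca *s (B *v x) = H *v x + \<i> *s (K *v x)" for x
  proof -
    have "(H *v x + \<i> *s (K *v x)) $ i = (ca *s (B *v x)) $ i" for i
    proof -
      have "(H *v x + \<i> *s (K *v x)) $ i = (\<Sum>j\<in>UNIV. (H$i$j + \<i> * K$i$j) * x$j)"
        by (simp add: matrix_vector_mult_def sum_distrib_left sum.distrib[symmetric] algebra_simps)
      also have "\<dots> = (ca *s (B *v x)) $ i"
        by (simp add: HKe matrix_vector_mult_def sum_distrib_left mult.assoc)
      finally show ?thesis .
    qed
    then show ?thesis by (simp add: vec_eq_iff)
  qed
  have cinHK: "cinner u (H *v w) + \<i> * cinner u (K *v w) = ca * cinner u (B *v w)" for u w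
  proof -
    have "ca * cinner u (B *v w) = cinner u (ca *s (B *v w))" by (simp add: cinner_scale_right)
    also have "\<dots> = cinner u (H *v w) + \<i> * cinner u (K *v w)"
      by (simp add: HK cinner_add_right cinner_scale_right)
    finally show ?thesis by simp
  qed
  have qHK: "Re (qform H x) = Re (ca * qform B x)" for x
  proof -
    have "qform H x + \<i> * qform K x = ca * qform B x" using cinHK[of x x] by (simp add: qform_cinner)
    moreover have "qform K x = of_real (Re (qform K x))" by (rule qform_real[OF hK])
    ultimately have "ca * qform B x = qform H x + \<i> * of_real (Re (qform K x))" by simp
    then show ?thesis by simp
  qed
  have posH: "Re (qform H x) > 0" if "x \<noteq> 0" for x
  proof -
    define xh where "xh = (of_real (1 / norm x) :: complex) *s x"
    have "norm xh = 1" using that unfolding xh_def norm_ofreal_smult by simp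
    then have p: "Re (ca * qform B xh) > 0" by (rule posB)
    have e: "Re (ca * qform B xh) = (1 / norm x) * (1 / norm x) * Re (ca * qform B x)"
      unfolding xh_def qform_ofreal_scale by (simp add: mult.left_commute)
    have q: "0 < (1 / norm x * (1 / norm x)) * Re (ca * qform B x)" using p e by linarith
    have "0 < 1 / norm x * (1 / norm x)" using that by simp
    then have "Re (ca * qform B x) > 0" by (rule zero_less_mult_pos[OF q])
    then show ?thesis by (simp add: qHK)
  qed
  obtain v :: "'n \<Rightarrow> complex^'n" where v1: "\<forall>i\<in>UNIV. \<forall>j\<in>UNIV. cinner (v i) (H *v v j) = (if i = j then 1 else 0)"
    and v2: "\<forall>i\<in>UNIV. \<forall>j\<in>UNIV. i \<noteq> j \<longrightarrow> cinner (v i) (K *v v j) = 0"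
  proof -
    have "\<exists>v::'n \<Rightarrow> complex^'n. (\<forall>i\<in>UNIV. \<forall>j\<in>UNIV. cinner (v i) (H *v v j) = (if i = j then 1 else 0)) \<and>
      (\<forall>i\<in>UNIV. \<forall>j\<in>UNIV. i \<noteq> j \<longrightarrow> cinner (v i) (K *v v j) = 0) \<and>
      (\<forall>w. (\<forall>i\<in>UNIV. cinner (v i) (H *v w) = 0) \<longrightarrow> (\<forall>i\<in>UNIV. cinner (v i) (K *v w) = 0))"
      by (rule simul_family[OF hH hK]) (rule posH)
    then show ?thesis by (elim exE conjE) (rule that; assumption)
  qed
  define P :: "complex^'n^'n" where "P = (\<chi> k i. v i $ k)"
  have colP: "column i P = v i" for i by (simp add: P_def column_def vec_eq_iff)
  have PHP: "cnj_tr P ** H ** P = mat 1" using v1 by (simp add: vec_eq_iff congr_entry colP mat_def)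
  define lam where "lam i = Re (qform K (v i))" for i
  define Cm :: "complex^'n^'n" where "Cm = (\<chi> i j. ca * B$i$j)"
  have Cmv: "Cm *v x = ca *s (B *v x)" for x
    by (simp add: Cm_def matrix_vector_mult_def vec_eq_iff sum_distrib_left mult.assoc)
  have PCP: "cnj_tr P ** Cm ** P = dg (\<lambda>i. 1 + \<i> * of_real (lam i))"
  proof -
    have "(cnj_tr P ** Cm ** P)$i$j = (dg (\<lambda>i. 1 + \<i> * of_real (lam i)))$i$j" for i j
    proof -
      have "(cnj_tr P ** Cm ** P)$i$j = ca * cinner (v i) (B *v v j)"
        by (simp add: congr_entry colP Cmv cinner_scale_right)
      also have "\<dots> = cinner (v i) (H *v v j) + \<i> * cinner (v i) (K *v v j)" by (simp add: cinHK)
      also have "\<dots> = (if i = j then 1 + \<i> * of_real (lam i) else 0)"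
      proof (cases "i = j")
        case True
        have "cinner (v i) (H *v v i) = 1" using v1 by simp
        moreover have "cinner (v i) (K *v v i) = of_real (lam i)"
          unfolding lam_def qform_cinner[symmetric] by (rule qform_real[OF hK])
        ultimately show ?thesis using True by simp
      next
        case False
        have "cinner (v i) (H *v v j) = 0" using v1 False by simp
        moreover have "cinner (v i) (K *v v j) = 0" using v2 False by simp
        ultimately show ?thesis using False by simp
      qed
      finally show ?thesis by (simp add: dg_def)
    qed
    then show ?thesis by (simp add: vec_eq_iff)
  qed
  have invP: "invertible P" using PHP invertible_left_inverse by (metis matrix_mul_assoc)
  obtain Ti where Ti: "P ** Ti = mat 1" "Ti ** P = mat 1" using invP unfolding invertible_def by blast
  have invTi: "invertible Ti" using Ti unfolding invertible_def by blast
  have CmD: "Cm = cnj_tr Ti ** dg (\<lambda>i. 1 + \<i> * of_real (lam i)) ** Ti"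
  proof -
    have "cnj_tr Ti ** (cnj_tr P ** Cm ** P) ** Ti = (cnj_tr Ti ** cnj_tr P) ** Cm ** (P ** Ti)"
      by (simp add: matrix_mul_assoc)
    also have "\<dots> = Cm" by (simp add: cnj_tr_mult[symmetric] Ti)
    finally show ?thesis using PCP by simp
  qed
  define f where "f k = (1 + \<i> * of_real (lam k)) / ca" for k
  have BD: "B = cnj_tr Ti ** dg f ** Ti"
  proof -
    have "(cnj_tr Ti ** dg f ** Ti)$a$b = B$a$b" for a b
    proof -
      have "(cnj_tr Ti ** dg f ** Ti)$a$b = (\<Sum>k\<in>UNIV. cnj (Ti$k$a) * (1 + \<i> * of_real (lam k)) * Ti$k$b) / ca"
        unfolding congr_dg_entry f_def sum_divide_distrib by (simp add: field_simps)
      also have "(\<Sum>k\<in>UNIV. cnj (Ti$k$a) * (1 + \<i> * of_real (lam k)) * Ti$k$b) = Cm$a$b"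
        by (simp add: CmD congr_dg_entry)
      also have "Cm$a$b / ca = B$a$b" using ca0 by (simp add: Cm_def)
      finally show ?thesis .
    qed
    then show ?thesis by (simp add: vec_eq_iff)
  qed
  define \<rho> where "\<rho> k = cmod (1 + \<i> * of_real (lam k)) / cmod ca" for k
  define \<phi> where "\<phi> k = arctan (lam k) - Arg ca" for k
  have cac: "ca = of_real (cmod ca) * cis (Arg ca)" by (metis rcis_cmod_Arg rcis_def)
  have frep: "f k = of_real (\<rho> k) * cis (\<phi> k)" for k
  proof -
    have "1 + \<i> * of_real (lam k) = of_real (cmod (1 + \<i> * of_real (lam k))) *
        cis (arctan (Im (1 + \<i> * of_real (lam k)) / Re (1 + \<i> * of_real (lam k))))"
      by (rule arg_rep) simp
    then have z: "1 + \<i> * of_real (lam k) = of_real (cmod (1 + \<i> * of_real (lam k))) * cis (arctan (lam k))"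
      by simp
    have "f k = (of_real (cmod (1 + \<i> * of_real (lam k))) * cis (arctan (lam k))) / (of_real (cmod ca) * cis (Arg ca))"
      unfolding f_def by (subst z, subst cac, rule refl)
    also have "\<dots> = of_real (\<rho> k) * cis (\<phi> k)" unfolding \<rho>_def \<phi>_def by (rule polar_div) (simp add: ca0)
    finally show ?thesis .
  qed
  have rpos: "\<rho> k > 0" for k
  proof -
    have "1 + \<i> * of_real (lam k) \<noteq> 0" by (simp add: complex_eq_iff)
    then show ?thesis using ca0 by (simp add: \<rho>_def)
  qed
  have exT: "\<exists>T'. invertible T' \<and> cnj_tr Ti ** dg f ** Ti = cnj_tr T' ** dg (\<lambda>k. cis (\<phi> k)) ** T'"
    by (rule rescale_lemma[OF invTi]) (rule frep, rule rpos)
  then obtain T' where T': "invertible T'" "cnj_tr Ti ** dg f ** Ti = cnj_tr T' ** dg (\<lambda>k. cis (\<phi> k)) ** T'"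
    by (elim exE conjE)
  have bnd: "- pi / 2 - Arg ca < \<phi> k \<and> \<phi> k < - pi / 2 - Arg ca + pi" for k
    using arctan_bounded[of "lam k"] by (simp add: \<phi>_def)
  have "\<exists>\<theta>. (\<forall>k. cis (\<theta> k) = cis (\<phi> k)) \<and> Max (range \<theta>) - Min (range \<theta>) < pi \<and>
     - pi < (Max (range \<theta>) + Min (range \<theta>)) / 2 \<and> (Max (range \<theta>) + Min (range \<theta>)) / 2 \<le> pi"
    by (rule shift_lemma) (rule bnd)
  then obtain \<theta> where th: "\<forall>k. cis (\<theta> k) = cis (\<phi> k)" "Max (range \<theta>) - Min (range \<theta>) < pi"
    "- pi < (Max (range \<theta>) + Min (range \<theta>)) / 2" "(Max (range \<theta>) + Min (range \<theta>)) / 2 \<le> pi"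
    by (elim exE conjE)
  have "(\<lambda>k. cis (\<phi> k)) = (\<lambda>k. cis (\<theta> k))" using th(1) by simp
  then have "B = cnj_tr T' ** (\<chi> i j. if i = j then cis (\<theta> i) else 0) ** T'"
    using BD T'(2) by (simp add: dg_def)
  then have "sectorial_decomp B T' \<theta>" using T'(1) th(2-4) by (simp add: sectorial_decomp_def)
  then show ?thesis by blast
qed

lemma phase_facts:
  fixes B :: "complex^'n^'n"
  assumes sec: "sectorial B"
  shows "\<exists>T \<theta>. sectorial_decomp B T \<theta> \<and> phase_max B = Max (range \<theta>) \<and> phase_min B = Min (range \<theta>)"
proof -
  obtain T0 \<theta>0 where d0: "sectorial_decomp B T0 \<theta>0" using decomp_exists[OF sec] by blast
  have "\<exists>m. \<exists>T \<theta>. sectorial_decomp B T \<theta> \<and> m = Max (range \<theta>)" using d0 by blast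
  then have "\<exists>T \<theta>. sectorial_decomp B T \<theta> \<and> phase_max B = Max (range \<theta>)"
    unfolding phase_max_def by (rule someI_ex)
  then obtain T1 \<theta>1 where d1: "sectorial_decomp B T1 \<theta>1" "phase_max B = Max (range \<theta>1)" by blast
  have "\<exists>m. \<exists>T \<theta>. sectorial_decomp B T \<theta> \<and> m = Min (range \<theta>)" using d0 by blast
  then have "\<exists>T \<theta>. sectorial_decomp B T \<theta> \<and> phase_min B = Min (range \<theta>)"
    unfolding phase_min_def by (rule someI_ex)
  then obtain T2 \<theta>2 where d2: "sectorial_decomp B T2 \<theta>2" "phase_min B = Min (range \<theta>2)" by blast
  have z: "0 \<notin> num_range B" using sec by (simp add: sectorial_def)
  have lt: "Max (range \<theta>0) - Min (range \<theta>0) < pi" using d0 by (simp add: sectorial_decomp_def)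
  have u1: "Min (range \<theta>1) = Min (range \<theta>0) \<and> Max (range \<theta>1) = Max (range \<theta>0)"
    using arc_unique[OF z decomp_arc[OF d0] decomp_arc[OF d1(1)] lt] .
  have u2: "Min (range \<theta>2) = Min (range \<theta>0) \<and> Max (range \<theta>2) = Max (range \<theta>0)"
    using arc_unique[OF z decomp_arc[OF d0] decomp_arc[OF d2(1)] lt] .
  show ?thesis using d0 d1 d2 u1 u2 by auto
qed

lemma psi_facts:
  fixes A :: "complex^'n^'n"
  assumes r: "0 \<le> r" and rs: "r_sectorial r A" and le: "\<not> r > sigma_max A" and ne: "Wset r A \<noteq> {}"
  shows "\<exists>a b. angle_arc ((\<lambda>w. (Re w, Im w)) ` Wset r A) a b \<and> psi_min r A = ereal a \<and> psi_max r A = ereal b"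
proof -
  have z: "0 \<notin> Wset r A" using rs r_sectorial_iff[OF r, of A] by simp
  obtain a0 b0 where ab: "b0 - a0 < pi" "angle_arc ((\<lambda>w. (Re w, Im w)) ` Wset r A) a0 b0"
    using arc_exists[OF Wset_compact Wset_convex[OF r] ne z] by blast
  have W: "W_ge r A = (\<lambda>w. (Re w, Im w)) ` Wset r A" by (rule W_ge_eq[OF r])
  have "\<exists>a. angle_arc (W_ge r A) a (SOME b. \<exists>a. angle_arc (W_ge r A) a b)"
    by (rule someI_ex[where P = "\<lambda>b. \<exists>a. angle_arc (W_ge r A) a b"])
      (rule exI[of _ b0], rule exI[of _ a0], simp only: W, rule ab(2))
  then obtain a1 where a1: "angle_arc (W_ge r A) a1 (SOME b. \<exists>a. angle_arc (W_ge r A) a b)" by blast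
  have "\<exists>b. angle_arc (W_ge r A) (SOME a. \<exists>b. angle_arc (W_ge r A) a b) b"
    by (rule someI_ex[where P = "\<lambda>a. \<exists>b. angle_arc (W_ge r A) a b"])
      (rule exI[of _ a0], rule exI[of _ b0], simp only: W, rule ab(2))
  then obtain b2 where b2: "angle_arc (W_ge r A) (SOME a. \<exists>b. angle_arc (W_ge r A) a b) b2" by blast
  have e1: "(SOME b. \<exists>a. angle_arc (W_ge r A) a b) = b0"
    unfolding W using arc_unique[OF z ab(2) a1[unfolded W] ab(1)] by simp
  have e2: "(SOME a. \<exists>b. angle_arc (W_ge r A) a b) = a0"
    unfolding W using arc_unique[OF z ab(2) b2[unfolded W] ab(1)] by simp
  have "psi_min r A = ereal a0" "psi_max r A = ereal b0"
    using le e1 e2 by (simp_all add: psi_min_def psi_max_def)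
  then show ?thesis using ab(2) by blast
qed

theorem theorem5:
  fixes A B :: "complex^'n^'n"
  assumes "sectorial B"
    and "\<exists>r::real. r \<ge> 0 \<and> r_sectorial r A \<and>
           psi_max r A + ereal (phase_max B) < ereal pi \<and>
           psi_min r A + ereal (phase_min B) > ereal (- pi) \<and>
           sigma_max B * r < 1"
  shows "invertible (mat 1 + A ** B)"
proof (rule ccontr)
  assume ninv: "\<not> invertible (mat 1 + A ** B)"
  obtain r where r: "r \<ge> 0" "r_sectorial r A" and hmax: "psi_max r A + ereal (phase_max B) < ereal pi"
    and hmin: "psi_min r A + ereal (phase_min B) > ereal (- pi)" and hs: "sigma_max B * r < 1"
    using assms(2) by blast
  obtain x where x: "(mat 1 + A ** B) *v x = 0" "x \<noteq> 0"
    using ninv unfolding invertible_left_inverse matrix_left_invertible_ker by blast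
  define y where "y = B *v x"
  have xAy: "x = - (A *v y)"
    using x(1) by (simp add: y_def matrix_vector_mult_add_rdistrib matrix_vector_mul_assoc[symmetric] eq_neg_iff_add_eq_0)
  have y0: "y \<noteq> 0" using xAy x(2) by auto
  have nx: "norm x > 0" and ny: "norm y > 0" using x(2) y0 by simp_all
  have yb: "norm y \<le> sigma_max B * norm x"
    unfolding y_def sigma_max_def by (rule onorm) simp
  define u where "u = (of_real (1 / norm y) :: complex) *s y"
  have u1: "norm u = 1" using ny unfolding u_def norm_ofreal_smult by simp
  have Au: "A *v u = - ((of_real (1 / norm y) :: complex) *s x)"
    by (simp add: u_def vector_scalar_commute xAy)
  have nAu: "norm (A *v u) = norm x / norm y"
    unfolding Au norm_minus_cancel norm_ofreal_smult using ny by simp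
  have "r * norm y \<le> r * (sigma_max B * norm x)" using yb r(1) by (rule mult_left_mono)
  also have "\<dots> < norm x" using hs nx by (simp add: mult.assoc[symmetric] mult.commute[of r])
  finally have "r * norm y < norm x" .
  then have rlt: "r < norm (A *v u)" unfolding nAu using ny by (simp add: field_simps)
  have "norm (A *v u) \<le> sigma_max A * norm u" unfolding sigma_max_def by (rule onorm) simp
  then have le: "\<not> r > sigma_max A" using rlt u1 by simp
  define w where "w = qform A u"
  have wW: "w \<in> Wset r A" using u1 rlt by (auto simp: Wset_def w_def)
  obtain a b where ab: "angle_arc ((\<lambda>w. (Re w, Im w)) ` Wset r A) a b" "psi_min r A = ereal a" "psi_max r A = ereal b"
    using psi_facts[OF r(1) r(2) le] wW by blast
  obtain T \<theta> where th: "sectorial_decomp B T \<theta>" "phase_max B = Max (range \<theta>)" "phase_min B = Min (range \<theta>)"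
    using phase_facts[OF assms(1)] by blast
  have b1: "b + Max (range \<theta>) < pi" using hmax ab(3) th(2) by simp
  have a1: "a + Min (range \<theta>) > - pi" using hmin ab(2) th(3) by simp
  have w0: "w \<noteq> 0" using wW r_sectorial_iff[OF r(1), of A] r(2) by auto
  obtain \<psi> where psi: "a \<le> \<psi>" "\<psi> \<le> b" "w = of_real (cmod w) * cis \<psi>"
    using ab(1) wW unfolding angle_arc_iff by blast
  define xh where "xh = (of_real (1 / norm x) :: complex) *s x"
  have xh1: "norm xh = 1" using nx unfolding xh_def norm_ofreal_smult by simp
  define \<zeta> where "\<zeta> = qform B xh"
  have zN: "\<zeta> \<in> num_range B" using xh1 by (auto simp: num_range_def \<zeta>_def)
  obtain \<phi> where phi: "Min (range \<theta>) \<le> \<phi>" "\<phi> \<le> Max (range \<theta>)" "\<zeta> = of_real (cmod \<zeta>) * cis \<phi>"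
    using decomp_arc[OF th(1)] zN unfolding angle_arc_iff by blast
  have xxh: "x = (of_real (norm x) :: complex) *s xh" using nx by (simp add: xh_def vector_smult_assoc)
  have qBx: "qform B x = of_real ((norm x)^2) * \<zeta>"
    unfolding \<zeta>_def by (subst xxh) (simp add: qform_ofreal_scale power2_eq_square)
  have wrel: "w = - of_real ((norm x / norm y)^2) * cnj \<zeta>"
  proof -
    have "w = cinner u (A *v u)" by (simp add: w_def qform_cinner)
    also have "\<dots> = - (of_real (1 / norm y) * of_real (1 / norm y)) * cinner y x"
      unfolding Au unfolding u_def cinner_minus_right cinner_scale_left cinner_scale_right
      by simp
    also have "cinner y x = cnj (qform B x)" by (simp only: y_def qform_cinner) (rule cinner_commute)
    finally show ?thesis unfolding qBx by (simp add: power2_eq_square field_simps)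
  qed
  define \<rho> where "\<rho> = (norm x / norm y)^2 * cmod \<zeta>"
  have z0: "\<zeta> \<noteq> 0" using w0 wrel by auto
  have rho: "\<rho> > 0" using nx ny z0 by (simp add: \<rho>_def)
  have "w = of_real \<rho> * cis (pi - \<phi>)"
  proof -
    have "cnj \<zeta> = of_real (cmod \<zeta>) * cis (- \<phi>)" by (subst phi(3)) (simp add: cis_cnj)
    then have "w = of_real ((norm x / norm y)^2 * cmod \<zeta>) * (- cis (- \<phi>))" using wrel by simp
    also have "- cis (- \<phi>) = cis (pi - \<phi>)" by (simp add: minus_cis)
    finally show ?thesis by (simp add: \<rho>_def)
  qed
  moreover have "cmod w = \<rho>" using calculation rho by (simp add: norm_mult)
  ultimately have "w = of_real (cmod w) * cis (pi - \<phi>)" by simp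
  then obtain k :: int where k: "\<psi> = pi - \<phi> + 2 * pi * real_of_int k"
    using same_angle[OF w0 psi(3)] by blast
  have s1: "\<psi> + \<phi> < pi" using psi phi b1 by linarith
  have s2: "\<psi> + \<phi> > - pi" using psi phi a1 by linarith
  have "2 * pi * real_of_int k < 0" using s1 k by linarith
  then have kn: "real_of_int k < 0" using pi_gt_zero by (simp add: mult_less_0_iff)
  have "(2 * pi) * (real_of_int k + 1) > 0" using s2 k by (simp only: distrib_left; linarith)
  then have "real_of_int k + 1 > 0" using pi_gt_zero by (simp add: zero_less_mult_iff)
  then have "real_of_int (k + 1) > 0" by simp
  then have "k + 1 > 0" by (simp only: of_int_0_less_iff)
  moreover have "k < 0" using kn by simp
  ultimately show False by linarith
qed

end
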